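(* Fix $\theta\in(\theta^-,\theta^+)$, $\boldsymbol{\kappa}=(\kappa_1,\dots,\kappa_4)\in\mathbb{R}^4$, $\delta\theta_{\mathbf{u}_0},\delta\theta_{\mathbf{v}_0}\in\mathbb{R}$ and $\boldsymbol{\omega}_{\mathbf{u}_0},\boldsymbol{\omega}_{\mathbf{v}_0}\in\mathbb{R}^3$. As $\ell\to0$ (all these parameters fixed), $$\mathbf{t}^{(\ell)}_{1,-,\mathbf{v}_0}-\mathbf{t}^{(\ell)}_{1,+},\quad\mathbf{t}^{(\ell)}_{3,-,\mathbf{v}_0}-\mathbf{t}^{(\ell)}_{3,+},\quad\mathbf{t}^{(\ell)}_{2,-,\mathbf{u}_0}-\mathbf{t}^{(\ell)}_{2,+},\quad\mathbf{t}^{(\ell)}_{4,-,\mathbf{u}_0}-\mathbf{t}^{(\ell)}_{4,+}$$ are all $O(\ell^2)$ if and only if (a) $\boldsymbol{\omega}_{\mathbf{u}_0}\times\mathbf{v}(\theta)+\delta\theta_{\mathbf{u}_0}\mathbf{v}'(\theta)=\boldsymbol{\omega}_{\mathbf{v}_0}\times\mathbf{u}(\theta)+\delta\theta_{\mathbf{v}_0}\mathbf{u}'(\theta)$ and $\boldsymbol{\omega}_{\mathbf{u}_0}\cdot\mathbf{v}'(\theta)=\boldsymbol{\omega}_{\mathbf{v}_0}\cdot\mathbf{u}'(\theta)$; and (b) $\boldsymbol{\kappa}=\mathbf{B}(\theta)(\boldsymbol{\omega}_{\mathbf{u}_0},\delta\theta_{\mathbf{u}_0},\boldsymbol{\omega}_{\mathbf{v}_0},\delta\theta_{\mathbf{v}_0})$,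 i.e. $\kappa_1=\frac{(\mathbf{t}_2\times\mathbf{t}_3)\cdot\boldsymbol{\omega}_{\mathbf{u}_0}+(\mathbf{t}_3\cdot\mathbf{t}_2')\delta\theta_{\mathbf{u}_0}}{V_{123}}$, $\kappa_2=\frac{(\mathbf{t}_3\times\mathbf{t}_4)\cdot\boldsymbol{\omega}_{\mathbf{v}_0}+(\mathbf{t}_3'\cdot\mathbf{t}_4)\delta\theta_{\mathbf{v}_0}}{V_{234}}$, $\kappa_3=\frac{(\mathbf{t}_4\times\mathbf{t}_1)\cdot\boldsymbol{\omega}_{\mathbf{u}_0}+(\mathbf{t}_1\cdot\mathbf{t}_4')\delta\theta_{\mathbf{u}_0}}{V_{314}}$, $\kappa_4=\frac{(\mathbf{t}_1\times\mathbf{t}_2)\cdot\boldsymbol{\omega}_{\mathbf{v}_0}+(\mathbf{t}_1'\cdot\mathbf{t}_2)\delta\theta_{\mathbf{v}_0}}{V_{421}}$ (all $\mathbf{t}_i$ evaluated at $\theta$). Moreover, condition (a) holds if and only if there are $k,\tau\in\mathbb{R}$ with $\boldsymbol{\omega}_{\mathbf{u}_0}=\tau\mathbf{u}(\theta)+k(\mathbf{u}'\cdot\mathbf{u})\mathbf{v}(\theta)+\frac{\delta\theta_{\mathbf{u}_0}\mathbf{v}'\cdot\mathbf{u}-\delta\theta_{\mathbf{v}_0}\mathbf{u}'\cdot\mathbf{u}}{\mathbf{e}_3\cdot(\mathbf{u}\times\mathbf{v})}\mathbf{e}_3$ and $\boldsymbol{\omega}_{\mathbf{v}_0}=k(\mathbf{v}'\cdot\mathbf{v})\mathbf{u}(\theta)-\tau\mathbf{v}(\theta)+\frac{\delta\theta_{\mathbf{u}_0}\mathbf{v}'\cdot\mathbf{v}-\delta\theta_{\mathbf{v}_0}\mathbf{u}'\cdot\mathbf{v}}{\mathbf{e}_3\cdot(\mathbf{u}\times\mathbf{v})}\mathbf{e}_3$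 (with $\mathbf{u},\mathbf{v},\mathbf{u}',\mathbf{v}'$ evaluated at $\theta$).
   Context: Design: $\mathbf{t}_1^r,\dots,\mathbf{t}_4^r\in\mathbb{R}^3$ with $\mathbf{t}_i^r\cdot(\mathbf{t}_j^r\times\mathbf{t}_k^r)\neq0$ for $ijk\in\{123,234,341,412\}$, non-self-intersecting, with $\mathbf{u}_0:=\mathbf{t}_1^r-\mathbf{t}_3^r$, $\mathbf{v}_0:=\mathbf{t}_2^r-\mathbf{t}_4^r$ orthogonal to $\mathbf{e}_3$, $\mathbf{e}_3\cdot(\mathbf{u}_0\times\mathbf{v}_0)>0$. $\mathbf{t}_i:(\theta^-,\theta^+)\to\mathbb{R}^3$ is the analytic mechanism parameterization of the cell (rigid folding preserving crease lengths, adjacent-crease angles and the signs of the triple products $\mathbf{t}_i\cdot(\mathbf{t}_j\times\mathbf{t}_k)$, $ijk\in\{123,234,341,412\}$, with $\mathbf{t}_i(0)=\mathbf{t}_i^r$, $\theta$ the change of dihedral angle at the $\mathbf{t}_4$ crease, normalized so that $\mathbf{u}(\theta):=\mathbf{t}_1(\theta)-\mathbf{t}_3(\theta)$ and $\mathbf{v}(\theta):=\mathbf{t}_2(\theta)-\mathbf{t}_4(\theta)$ are orthogonal to $\mathbf{e}_3$ with $\mathbf{e}_3\cdot(\mathbf{u}\times\mathbf{v})>0$); in particular $\mathbf{u}'\cdot\mathbf{u}$ and $\mathbf{v}'\cdot\mathbf{v}$ never vanish and $V_{ijk}(\theta):=\mathbf{t}_i(\theta)\cdot(\mathbf{t}_j(\theta)\times\mathbf{t}_k(\theta))\neq0$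 for distinct $i,j,k$. Primes are $d/d\theta$; $(\mathbf{a}\times)\mathbf{b}:=\mathbf{a}\times\mathbf{b}$. Bent boundary tangents (arguments $(\theta,\boldsymbol{\kappa})$ suppressed on the right): $\mathbf{t}^{(\ell)}_{1,-}=\mathbf{t}_1+\ell\kappa_4(\mathbf{t}_4\times\mathbf{t}_1)$, $\mathbf{t}^{(\ell)}_{1,+}=\mathbf{t}_1+\ell\kappa_1(\mathbf{t}_1\times\mathbf{t}_2)$, $\mathbf{t}^{(\ell)}_{2,-}=\mathbf{t}_2+\ell\kappa_2(\mathbf{t}_2\times\mathbf{t}_3)$, $\mathbf{t}^{(\ell)}_{2,+}=\mathbf{t}_2+\ell\kappa_1(\mathbf{t}_1\times\mathbf{t}_2)$, $\mathbf{t}^{(\ell)}_{3,-}=\mathbf{t}_3+\ell\kappa_3(\mathbf{t}_3\times\mathbf{t}_4)$, $\mathbf{t}^{(\ell)}_{3,+}=\mathbf{t}_3+\ell\kappa_2(\mathbf{t}_2\times\mathbf{t}_3)$, $\mathbf{t}^{(\ell)}_{4,-}=\mathbf{t}_4+\ell\kappa_3(\mathbf{t}_3\times\mathbf{t}_4)$, $\mathbf{t}^{(\ell)}_{4,+}=\mathbf{t}_4+\ell\kappa_4(\mathbf{t}_4\times\mathbf{t}_1)$, with $\mathbf{t}_i=\mathbf{t}_i(\theta)$. Neighbor tangents: $\mathbf{t}^{(\ell)}_{i,\pm,\mathbf{v}_0}:=(\mathbf{I}+\ell(\boldsymbol{\omega}_{\mathbf{v}_0}\times))\mathbf{t}^{(\ell)}_{i,\pm}(\theta+\ell\delta\theta_{\mathbf{v}_0},\boldsymbol{\kappa})$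 and $\mathbf{t}^{(\ell)}_{i,\pm,\mathbf{u}_0}:=(\mathbf{I}+\ell(\boldsymbol{\omega}_{\mathbf{u}_0}\times))\mathbf{t}^{(\ell)}_{i,\pm}(\theta+\ell\delta\theta_{\mathbf{u}_0},\boldsymbol{\kappa})$; the unsubscripted $\mathbf{t}^{(\ell)}_{i,+}$ means $\mathbf{t}^{(\ell)}_{i,+}(\theta,\boldsymbol{\kappa})$. *)

theory Defs
  imports "HOL-Analysis.Analysis" "HOL-Library.Landau_Symbols"
begin

definition real_analytic_on :: "(real \<Rightarrow> 'a::real_normed_vector) \<Rightarrow> real set \<Rightarrow> bool" where
  "real_analytic_on f S \<longleftrightarrow>
     (\<forall>x\<in>S. \<exists>r>0. \<exists>c::nat \<Rightarrow> 'a. \<forall>y. \<bar>y - x\<bar> < r \<longrightarrow> (\<lambda>n. (y - x) ^ n *\<^sub>R c n) sums f y)"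

definition e3 :: "real^3" where "e3 = axis 3 1"

definition Vtp :: "(nat \<Rightarrow> real \<Rightarrow> real^3) \<Rightarrow> nat \<Rightarrow> nat \<Rightarrow> nat \<Rightarrow> real \<Rightarrow> real" where
  "Vtp t i j k s = t i s \<bullet> cross3 (t j s) (t k s)"

text \<open>Bent boundary tangents t^(l)_{i,-} (tm i) and t^(l)_{i,+} (tp i), as functions of l and theta.\<close>
definition tm1 :: "(nat \<Rightarrow> real \<Rightarrow> real^3) \<Rightarrow> real^4 \<Rightarrow> real \<Rightarrow> real \<Rightarrow> real^3" where
  "tm1 t \<kappa> l s = t 1 s + (l * \<kappa>$4) *\<^sub>R cross3 (t 4 s) (t 1 s)"
definition tp1 :: "(nat \<Rightarrow> real \<Rightarrow> real^3) \<Rightarrow> real^4 \<Rightarrow> real \<Rightarrow> real \<Rightarrow> real^3" where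
  "tp1 t \<kappa> l s = t 1 s + (l * \<kappa>$1) *\<^sub>R cross3 (t 1 s) (t 2 s)"
definition tm2 :: "(nat \<Rightarrow> real \<Rightarrow> real^3) \<Rightarrow> real^4 \<Rightarrow> real \<Rightarrow> real \<Rightarrow> real^3" where
  "tm2 t \<kappa> l s = t 2 s + (l * \<kappa>$2) *\<^sub>R cross3 (t 2 s) (t 3 s)"
definition tp2 :: "(nat \<Rightarrow> real \<Rightarrow> real^3) \<Rightarrow> real^4 \<Rightarrow> real \<Rightarrow> real \<Rightarrow> real^3" where
  "tp2 t \<kappa> l s = t 2 s + (l * \<kappa>$1) *\<^sub>R cross3 (t 1 s) (t 2 s)"
definition tm3 :: "(nat \<Rightarrow> real \<Rightarrow> real^3) \<Rightarrow> real^4 \<Rightarrow> real \<Rightarrow> real \<Rightarrow> real^3" where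
  "tm3 t \<kappa> l s = t 3 s + (l * \<kappa>$3) *\<^sub>R cross3 (t 3 s) (t 4 s)"
definition tp3 :: "(nat \<Rightarrow> real \<Rightarrow> real^3) \<Rightarrow> real^4 \<Rightarrow> real \<Rightarrow> real \<Rightarrow> real^3" where
  "tp3 t \<kappa> l s = t 3 s + (l * \<kappa>$2) *\<^sub>R cross3 (t 2 s) (t 3 s)"
definition tm4 :: "(nat \<Rightarrow> real \<Rightarrow> real^3) \<Rightarrow> real^4 \<Rightarrow> real \<Rightarrow> real \<Rightarrow> real^3" where
  "tm4 t \<kappa> l s = t 4 s + (l * \<kappa>$3) *\<^sub>R cross3 (t 3 s) (t 4 s)"
definition tp4 :: "(nat \<Rightarrow> real \<Rightarrow> real^3) \<Rightarrow> real^4 \<Rightarrow> real \<Rightarrow> real \<Rightarrow> real^3" where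
  "tp4 t \<kappa> l s = t 4 s + (l * \<kappa>$4) *\<^sub>R cross3 (t 4 s) (t 1 s)"

definition nbr :: "real^3 \<Rightarrow> real \<Rightarrow> (real \<Rightarrow> real \<Rightarrow> real^3) \<Rightarrow> real \<Rightarrow> real \<Rightarrow> real^3" where
  "nbr \<omega> d\<theta> f l s = f l (s + l * d\<theta>) + l *\<^sub>R cross3 \<omega> (f l (s + l * d\<theta>))"

definition bigO2 :: "(real \<Rightarrow> real^3) \<Rightarrow> bool" where
  "bigO2 g \<longleftrightarrow> (\<lambda>l. norm (g l)) \<in> O[at 0](\<lambda>l. l ^ 2)"

end

theory Submission
  imports Defs
begin


definition tay :: "(real \<Rightarrow> real^3) \<Rightarrow> real \<Rightarrow> real^3 \<Rightarrow> bool" where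
  "tay f x D \<longleftrightarrow> (\<exists>K \<delta>. \<delta> > 0 \<and> (\<forall>h. \<bar>h\<bar> < \<delta> \<longrightarrow> norm (f (x+h) - f x - h *\<^sub>R D) \<le> K * h^2))"

lemma analytic_tay:
  fixes f :: "real \<Rightarrow> real^3"
  assumes S: "\<forall>y. \<bar>y - x\<bar> < r \<longrightarrow> (\<lambda>n. (y - x)^n *\<^sub>R c n) sums f y" and r: "r > 0"
  shows "tay f x (c 1)"
proof -
  have "(\<lambda>n. (x - x)^n *\<^sub>R c n) sums f x" using S[rule_format, of x] r by simp
  moreover have "(\<lambda>n. (x - x)^n *\<^sub>R c n) = (\<lambda>n. if n = 0 then c n else 0)" by (auto simp: zero_power)
  ultimately have fx: "f x = c 0" using sums_single[of 0 c] sums_unique2 by metis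
  define \<rho> where "\<rho> = r/2"
  have \<rho>: "\<rho> > 0" "\<rho> < r" using r by (auto simp: \<rho>_def)
  have "summable (\<lambda>n. ((x+\<rho>) - x)^n *\<^sub>R c n)" using S[rule_format, of "x+\<rho>"] \<rho> by (auto simp: sums_iff)
  hence "(\<lambda>n. \<rho>^n *\<^sub>R c n) \<longlonglongrightarrow> 0" using summable_LIMSEQ_zero by simp
  hence "Bseq (\<lambda>n. \<rho>^n *\<^sub>R c n)" by (rule convergent_imp_Bseq[OF convergentI])
  then obtain M where M: "M > 0" "\<And>n. norm (\<rho>^n *\<^sub>R c n) \<le> M" unfolding Bseq_def by blast
  have Mc: "\<rho>^n * norm (c n) \<le> M" for n using M(2)[of n] \<rho> by simp
  show ?thesis unfolding tay_def
  proof (intro exI conjI allI impI)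
    show "\<rho>/2 > 0" using \<rho> by simp
    fix h :: real assume h: "\<bar>h\<bar> < \<rho>/2"
    have "\<bar>(x+h) - x\<bar> < r" using h \<rho> by simp
    hence "(\<lambda>n. h^n *\<^sub>R c n) sums f (x+h)" using S[rule_format, of "x+h"] by simp
    from sums_split_initial_segment[OF this, of 2]
    have s2: "(\<lambda>n. h^(n+2) *\<^sub>R c (n+2)) sums (f (x+h) - f x - h *\<^sub>R c 1)"
      by (simp add: fx numeral_2_eq_2 lessThan_Suc algebra_simps)
    define q where "q = \<bar>h\<bar>/\<rho>"
    have q: "0 \<le> q" "q \<le> 1/2" using h \<rho> by (auto simp: q_def field_simps)
    have bnd: "norm (h^(n+2) *\<^sub>R c (n+2)) \<le> M * (h/\<rho>)^2 * (1/2)^n" for n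
    proof -
      have "norm (h^(n+2) *\<^sub>R c (n+2)) = q^(n+2) * (\<rho>^(n+2) * norm (c (n+2)))"
        using \<rho> by (simp add: q_def power_abs power_divide abs_mult)
      also have "\<dots> \<le> q^(n+2) * M" using Mc[of "n+2"] q by (intro mult_left_mono) auto
      also have "\<dots> = M * q^2 * q^n" by (simp add: power_add power2_eq_square)
      also have "\<dots> \<le> M * q^2 * (1/2)^n" using q M by (intro mult_left_mono power_mono) auto
      also have "q^2 = (h/\<rho>)^2" by (simp add: q_def power2_abs power_divide)
      finally show ?thesis .
    qed
    have sg: "summable (\<lambda>n. M * (h/\<rho>)^2 * (1/2::real)^n)"
      by (intro summable_mult summable_geometric) simp
    have "norm (f (x+h) - f x - h *\<^sub>R c 1) \<le> (\<Sum>n. M * (h/\<rho>)^2 * (1/2::real)^n)"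
      using norm_suminf_le[OF bnd sg] s2 by (simp add: sums_iff)
    also have "\<dots> = M * (h/\<rho>)^2 * 2" using suminf_mult[of "\<lambda>n. (1/2::real)^n"] suminf_geometric[of "1/2::real"]
      by (simp add: summable_geometric)
    also have "\<dots> = (2*M/\<rho>^2) * h^2" by (simp add: power_divide)
    finally show "norm (f (x+h) - f x - h *\<^sub>R c 1) \<le> (2*M/\<rho>^2) * h^2" .
  qed
qed



definition O2 :: "(real \<Rightarrow> real^3) \<Rightarrow> bool" where
  "O2 g \<longleftrightarrow> (\<exists>K. eventually (\<lambda>l. norm (g l) \<le> K * l^2) (at 0))"
definition O1 :: "(real \<Rightarrow> real^3) \<Rightarrow> bool" where
  "O1 g \<longleftrightarrow> (\<exists>K. eventually (\<lambda>l. norm (g l) \<le> K * \<bar>l\<bar>) (at 0))"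
definition O0 :: "(real \<Rightarrow> real^3) \<Rightarrow> bool" where
  "O0 g \<longleftrightarrow> (\<exists>K. eventually (\<lambda>l. norm (g l) \<le> K) (at 0))"

lemma ev_near0: "e > 0 \<Longrightarrow> (\<And>l. \<bar>l\<bar> < e \<Longrightarrow> P l) \<Longrightarrow> eventually P (at (0::real))"
  by (auto simp: eventually_at dist_real_def)

lemma ev_small: "eventually (\<lambda>l::real. \<bar>l\<bar> < 1) (at 0)"
  by (rule ev_near0[of 1]) auto

lemma norm_cross_le: "norm (cross3 x y) \<le> norm x * norm y"
proof -
  have "(norm (cross3 x y))^2 \<le> (norm x * norm y)^2" using norm_cross_dot[of x y] zero_le_power2[of "x \<bullet> y"] by linarith
  thus ?thesis by (rule power2_le_imp_le) simp
qed

lemma bigO2_iff: "bigO2 g \<longleftrightarrow> O2 g"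
proof
  assume "bigO2 g"
  then obtain c where "eventually (\<lambda>l. norm (norm (g l)) \<le> c * norm ((l::real)^2)) (at 0)"
    unfolding bigO2_def by (elim landau_o.bigE)
  thus "O2 g" unfolding O2_def by (auto elim!: eventually_mono)
next
  assume "O2 g"
  then obtain K where "eventually (\<lambda>l. norm (g l) \<le> K * l^2) (at 0)" unfolding O2_def by blast
  thus "bigO2 g" unfolding bigO2_def by (intro bigoI[of _ K]) (auto elim!: eventually_mono)
qed

lemma O2_add: "O2 f \<Longrightarrow> O2 g \<Longrightarrow> O2 (\<lambda>l. f l + g l)"
  unfolding O2_def
proof (elim exE)
  fix K1 K2 assume a: "eventually (\<lambda>l. norm (f l) \<le> K1 * l^2) (at 0)" "eventually (\<lambda>l. norm (g l) \<le> K2 * l^2) (at 0)"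
  show "\<exists>K. eventually (\<lambda>l. norm (f l + g l) \<le> K * l^2) (at 0)"
    by (rule exI[of _ "K1+K2"], rule eventually_mono[OF eventually_conj[OF a]])
       (auto simp: distrib_right intro: order.trans[OF norm_triangle_ineq])
qed

lemma O2_minus: "O2 f \<Longrightarrow> O2 (\<lambda>l. - f l)"
  unfolding O2_def by simp

lemma O2_diff: "O2 f \<Longrightarrow> O2 g \<Longrightarrow> O2 (\<lambda>l. f l - g l)"
  using O2_add[of f "\<lambda>l. - g l"] O2_minus[of g] by simp

lemma O1_add: "O1 f \<Longrightarrow> O1 g \<Longrightarrow> O1 (\<lambda>l. f l + g l)"
  unfolding O1_def
proof (elim exE)
  fix K1 K2 assume a: "eventually (\<lambda>l. norm (f l) \<le> K1 * \<bar>l\<bar>) (at 0)" "eventually (\<lambda>l. norm (g l) \<le> K2 * \<bar>l\<bar>) (at 0)"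
  show "\<exists>K. eventually (\<lambda>l. norm (f l + g l) \<le> K * \<bar>l\<bar>) (at 0)"
    by (rule exI[of _ "K1+K2"], rule eventually_mono[OF eventually_conj[OF a]])
       (auto simp: distrib_right intro: order.trans[OF norm_triangle_ineq])
qed

lemma O0_add: "O0 f \<Longrightarrow> O0 g \<Longrightarrow> O0 (\<lambda>l. f l + g l)"
  unfolding O0_def
proof (elim exE)
  fix K1 K2 assume a: "eventually (\<lambda>l. norm (f l) \<le> K1) (at 0)" "eventually (\<lambda>l. norm (g l) \<le> K2) (at 0)"
  show "\<exists>K. eventually (\<lambda>l. norm (f l + g l) \<le> K) (at 0)"
    by (rule exI[of _ "K1+K2"], rule eventually_mono[OF eventually_conj[OF a]])
       (auto intro: order.trans[OF norm_triangle_ineq])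
qed

lemma O1_cross: "O1 f \<Longrightarrow> O0 g \<Longrightarrow> O1 (\<lambda>l. cross3 (f l) (g l))"
  unfolding O1_def O0_def
proof (elim exE)
  fix K1 K2 assume a: "eventually (\<lambda>l. norm (f l) \<le> K1 * \<bar>l\<bar>) (at 0)" "eventually (\<lambda>l. norm (g l) \<le> K2) (at 0)"
  show "\<exists>K. eventually (\<lambda>l. norm (cross3 (f l) (g l)) \<le> K * \<bar>l\<bar>) (at 0)"
  proof (rule exI[of _ "K1*K2"], rule eventually_mono[OF eventually_conj[OF a]], clarify)
    fix l assume h: "norm (f l) \<le> K1 * \<bar>l\<bar>" "norm (g l) \<le> K2"
    have "norm (cross3 (f l) (g l)) \<le> norm (f l) * norm (g l)" by (rule norm_cross_le)
    also have "\<dots> \<le> (K1 * \<bar>l\<bar>) * K2"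
      by (rule mult_mono[OF h(1) h(2)]) (use h(1) norm_ge_zero[of "f l"] in linarith, simp)
    finally show "norm (cross3 (f l) (g l)) \<le> K1 * K2 * \<bar>l\<bar>" by (simp add: ac_simps)
  qed
qed

lemma O1_cross2: "O0 f \<Longrightarrow> O1 g \<Longrightarrow> O1 (\<lambda>l. cross3 (f l) (g l))"
proof -
  assume "O0 f" "O1 g"
  hence "O1 (\<lambda>l. cross3 (g l) (f l))" by (rule O1_cross[rotated])
  hence "O1 (\<lambda>l. - cross3 (f l) (g l))" by (subst cross_skew) simp
  thus ?thesis unfolding O1_def by simp
qed

lemma O0_cross: "O0 f \<Longrightarrow> O0 g \<Longrightarrow> O0 (\<lambda>l. cross3 (f l) (g l))"
  unfolding O0_def
proof (elim exE)
  fix K1 K2 assume a: "eventually (\<lambda>l. norm (f l) \<le> K1) (at 0)" "eventually (\<lambda>l. norm (g l) \<le> K2) (at 0)"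
  show "\<exists>K. eventually (\<lambda>l. norm (cross3 (f l) (g l)) \<le> K) (at 0)"
  proof (rule exI[of _ "K1*K2"], rule eventually_mono[OF eventually_conj[OF a]], clarify)
    fix l assume h: "norm (f l) \<le> K1" "norm (g l) \<le> K2"
    have "norm (cross3 (f l) (g l)) \<le> norm (f l) * norm (g l)" by (rule norm_cross_le)
    also have "\<dots> \<le> K1 * K2"
      by (rule mult_mono[OF h(1) h(2)]) (use h(1) norm_ge_zero[of "f l"] in linarith, simp)
    finally show "norm (cross3 (f l) (g l)) \<le> K1 * K2" .
  qed
qed

lemma O0_const: "O0 (\<lambda>l. c)"
  unfolding O0_def by auto

lemma O1_O2: "O1 f \<Longrightarrow> O2 (\<lambda>l. (l*a) *\<^sub>R f l)"
  unfolding O1_def O2_def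
proof (elim exE)
  fix K assume a: "eventually (\<lambda>l. norm (f l) \<le> K * \<bar>l\<bar>) (at 0)"
  show "\<exists>K. eventually (\<lambda>l. norm ((l*a) *\<^sub>R f l) \<le> K * l^2) (at 0)"
  proof (rule exI[of _ "\<bar>a\<bar>*K"], rule eventually_mono[OF a])
    fix l assume h: "norm (f l) \<le> K * \<bar>l\<bar>"
    have "norm ((l*a) *\<^sub>R f l) = \<bar>l\<bar>*\<bar>a\<bar> * norm (f l)" by (simp add: abs_mult)
    also have "\<dots> \<le> \<bar>l\<bar>*\<bar>a\<bar> * (K * \<bar>l\<bar>)" using h by (intro mult_left_mono) auto
    also have "\<dots> = \<bar>a\<bar>*K * l^2" by (simp add: power2_eq_square abs_mult_self_eq)
    finally show "norm ((l*a) *\<^sub>R f l) \<le> \<bar>a\<bar>*K * l^2" .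
  qed
qed

lemma O0_O2: "O0 f \<Longrightarrow> O2 (\<lambda>l. (l*(l*a)) *\<^sub>R f l)"
  unfolding O0_def O2_def
proof (elim exE)
  fix K assume a: "eventually (\<lambda>l. norm (f l) \<le> K) (at 0)"
  show "\<exists>K. eventually (\<lambda>l. norm ((l*(l*a)) *\<^sub>R f l) \<le> K * l^2) (at 0)"
  proof (rule exI[of _ "\<bar>a\<bar>*K"], rule eventually_mono[OF a])
    fix l assume h: "norm (f l) \<le> K"
    have "norm ((l*(l*a)) *\<^sub>R f l) = l^2*\<bar>a\<bar> * norm (f l)" by (simp add: abs_mult power2_eq_square)
    also have "\<dots> \<le> l^2*\<bar>a\<bar> * K" using h by (intro mult_left_mono) auto
    finally show "norm ((l*(l*a)) *\<^sub>R f l) \<le> \<bar>a\<bar>*K * l^2" by (simp add: ac_simps)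
  qed
qed

lemma tay_O2: assumes "tay f x D" shows "O2 (\<lambda>l. f (x + l*d) - f x - (l*d) *\<^sub>R D)"
proof -
  obtain K \<delta> where K: "\<delta> > 0" "\<And>h. \<bar>h\<bar> < \<delta> \<Longrightarrow> norm (f (x+h) - f x - h *\<^sub>R D) \<le> K * h^2"
    using assms unfolding tay_def by blast
  have "eventually (\<lambda>l. norm (f (x + l*d) - f x - (l*d) *\<^sub>R D) \<le> (K*d^2) * l^2) (at 0)"
  proof (rule ev_near0[of "\<delta>/(\<bar>d\<bar>+1)"])
    show "\<delta>/(\<bar>d\<bar>+1) > 0" using K by simp
    fix l assume l: "\<bar>l\<bar> < \<delta>/(\<bar>d\<bar>+1)"
    have "\<bar>l*d\<bar> \<le> \<bar>l\<bar>*(\<bar>d\<bar>+1)" by (simp add: abs_mult mult_left_mono)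
    also have "\<dots> < \<delta>" using l by (simp add: field_simps)
    finally have "norm (f (x+l*d) - f x - (l*d) *\<^sub>R D) \<le> K * (l*d)^2" using K(2) by blast
    thus "norm (f (x + l*d) - f x - (l*d) *\<^sub>R D) \<le> (K*d^2) * l^2" by (simp add: power_mult_distrib ac_simps)
  qed
  thus ?thesis unfolding O2_def by blast
qed

lemma tay_O1: assumes "tay f x D" shows "O1 (\<lambda>l. f (x + l*d) - f x)"
proof -
  obtain K where K: "eventually (\<lambda>l. norm (f (x + l*d) - f x - (l*d) *\<^sub>R D) \<le> K * l^2) (at 0)"
    using tay_O2[OF assms, of d] unfolding O2_def by blast
  have "eventually (\<lambda>l. norm (f (x + l*d) - f x) \<le> (\<bar>K\<bar> + \<bar>d\<bar>*norm D) * \<bar>l\<bar>) (at 0)"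
  proof (rule eventually_mono[OF eventually_conj[OF K ev_small]], clarify)
    fix l :: real assume h: "norm (f (x + l*d) - f x - (l*d) *\<^sub>R D) \<le> K * l^2" "\<bar>l\<bar> < 1"
    have "norm (f (x + l*d) - f x) \<le> norm (f (x + l*d) - f x - (l*d) *\<^sub>R D) + norm ((l*d) *\<^sub>R D)"
      using norm_triangle_ineq[of "f(x+l*d) - f x - (l*d) *\<^sub>R D" "(l*d) *\<^sub>R D"] by (simp only: diff_add_cancel)
    also have "\<dots> \<le> \<bar>K\<bar> * \<bar>l\<bar> + \<bar>l\<bar>*\<bar>d\<bar>*norm D"
    proof -
      have "K * l^2 \<le> \<bar>K\<bar> * \<bar>l\<bar>"
      proof -
        have "K * l^2 \<le> \<bar>K\<bar> * l^2" by (simp add: mult_right_mono)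
        also have "\<dots> \<le> \<bar>K\<bar> * \<bar>l\<bar>"
        proof (rule mult_left_mono)
          have "l^2 = \<bar>l\<bar>*\<bar>l\<bar>" by (simp add: power2_eq_square abs_mult_self_eq)
          also have "\<dots> \<le> \<bar>l\<bar>*1" using h(2) by (intro mult_left_mono) auto
          finally show "l^2 \<le> \<bar>l\<bar>" by simp
        qed simp
        finally show ?thesis .
      qed
      thus ?thesis using h(1) by (simp add: abs_mult)
    qed
    finally show "norm (f (x + l*d) - f x) \<le> (\<bar>K\<bar> + \<bar>d\<bar>*norm D) * \<bar>l\<bar>" by (simp add: algebra_simps)
  qed
  thus ?thesis unfolding O1_def by blast
qed

lemma O1_O0: "O1 f \<Longrightarrow> O0 f"
  unfolding O1_def O0_def
proof (elim exE)
  fix K assume a: "eventually (\<lambda>l. norm (f l) \<le> K * \<bar>l\<bar>) (at 0)"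
  show "\<exists>K. eventually (\<lambda>l. norm (f l) \<le> K) (at 0)"
  proof (rule exI[of _ "\<bar>K\<bar>"], rule eventually_mono[OF eventually_conj[OF a ev_small]], clarify)
    fix l :: real assume h: "norm (f l) \<le> K * \<bar>l\<bar>" "\<bar>l\<bar> < 1"
    have "\<bar>K\<bar> * \<bar>l\<bar> \<le> \<bar>K\<bar> * 1" using h(2) by (intro mult_left_mono) auto
    moreover have "K * \<bar>l\<bar> \<le> \<bar>K\<bar> * \<bar>l\<bar>" by (intro mult_right_mono) auto
    ultimately have "K * \<bar>l\<bar> \<le> \<bar>K\<bar> * 1" by linarith
    thus "norm (f l) \<le> \<bar>K\<bar>" using h by simp
  qed
qed

lemma tay_O0: assumes "tay f x D" shows "O0 (\<lambda>l. f (x + l*d))"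
proof -
  have "O0 (\<lambda>l. (f (x + l*d) - f x) + f x)"
    by (intro O0_add O1_O0 tay_O1[OF assms] O0_const)
  thus ?thesis by simp
qed

lemma O1_scale: "O1 f \<Longrightarrow> O1 (\<lambda>l. cross3 w (f l))"
  using O1_cross2[OF O0_const, of f w] by simp



lemma tay_deriv: assumes "tay f x D" shows "(f has_vector_derivative D) (at x)"
proof -
  obtain K \<delta> where K: "\<delta> > 0" "\<And>h. \<bar>h\<bar> < \<delta> \<Longrightarrow> norm (f (x+h) - f x - h *\<^sub>R D) \<le> K * h^2"
    using assms unfolding tay_def by blast
  have "(\<lambda>h. norm (f (x + h) - f x - h *\<^sub>R D) / norm h) \<midarrow>0\<rightarrow> 0"
  proof (rule Lim_null_comparison)
    show "eventually (\<lambda>h. norm (norm (f (x + h) - f x - h *\<^sub>R D) / norm h) \<le> K * \<bar>h\<bar>) (at 0)"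
    proof (rule ev_near0[of \<delta>])
      show "\<delta> > 0" by (rule K(1))
      fix h :: real assume h: "\<bar>h\<bar> < \<delta>"
      show "norm (norm (f (x + h) - f x - h *\<^sub>R D) / norm h) \<le> K * \<bar>h\<bar>"
      proof (cases "h = 0")
        case True thus ?thesis by simp
      next
        case False
        have "norm (f (x + h) - f x - h *\<^sub>R D) \<le> K * h^2" using K h by blast
        hence "norm (f (x + h) - f x - h *\<^sub>R D) \<le> (K * \<bar>h\<bar>) * \<bar>h\<bar>" by (simp add: power2_eq_square mult.assoc)
        thus ?thesis using False by (simp add: pos_divide_le_eq)
      qed
    qed
    show "((\<lambda>h. K * \<bar>h\<bar>) \<longlongrightarrow> 0) (at (0::real))"
      by (rule tendsto_mult_right_zero[OF tendsto_rabs_zero[OF tendsto_ident_at]])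
  qed
  thus ?thesis unfolding has_vector_derivative_def has_derivative_at
    by (simp add: bounded_linear_scaleR_left)
qed

lemma O2_coeff: assumes "O2 (\<lambda>l. g l - l *\<^sub>R c)" shows "bigO2 g \<longleftrightarrow> c = 0"
proof
  assume "c = 0" thus "bigO2 g" using assms by (simp add: bigO2_iff)
next
  assume "bigO2 g"
  hence "O2 g" by (simp add: bigO2_iff)
  from O2_diff[OF this assms] have "O2 (\<lambda>l. l *\<^sub>R c)" by simp
  then obtain K where K: "eventually (\<lambda>l. norm (l *\<^sub>R c) \<le> K * l^2) (at 0)" unfolding O2_def by blast
  then obtain e where e: "e > 0" "\<And>l. l \<noteq> 0 \<Longrightarrow> \<bar>l\<bar> < e \<Longrightarrow> norm (l *\<^sub>R c) \<le> K * l^2"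
    unfolding eventually_at by (auto simp: dist_real_def)
  show "c = 0"
  proof (rule ccontr)
    assume c: "c \<noteq> 0"
    define l where "l = min (e/2) (norm c / (2*(\<bar>K\<bar>+1)))"
    have l: "l > 0" "l < e" "l \<le> norm c / (2*(\<bar>K\<bar>+1))" using e c by (auto simp: l_def)
    have "l * norm c \<le> K * l^2" using e(2)[of l] l by simp
    also have "\<dots> \<le> (\<bar>K\<bar>+1) * l * l" using mult_right_mono[of K "\<bar>K\<bar>+1" "l*l"] by (simp add: power2_eq_square mult.assoc)
    finally have "norm c \<le> (\<bar>K\<bar>+1) * l" using l by (simp add: mult.commute)
    also have "\<dots> \<le> (\<bar>K\<bar>+1) * (norm c / (2*(\<bar>K\<bar>+1)))" using l by (intro mult_left_mono) auto
    also have "\<dots> = norm c / 2" by (simp add: field_simps)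
    finally show False using c by simp
  qed
qed

lemma key_expand:
  assumes X: "tay X x X'" and P: "tay P x P'" and Q: "tay Q x Q'"
  shows "O2 (\<lambda>l. (X(x+l*d) + (l*a) *\<^sub>R cross3 (P(x+l*d)) (Q(x+l*d))
             + l *\<^sub>R cross3 w (X(x+l*d) + (l*a) *\<^sub>R cross3 (P(x+l*d)) (Q(x+l*d)))
             - (X x + (l*b) *\<^sub>R MN))
           - l *\<^sub>R (d *\<^sub>R X' + a *\<^sub>R cross3 (P x) (Q x) + cross3 w (X x) - b *\<^sub>R MN))"
proof -
  have eq: "(X(x+l*d) + (l*a) *\<^sub>R cross3 (P(x+l*d)) (Q(x+l*d))
             + l *\<^sub>R cross3 w (X(x+l*d) + (l*a) *\<^sub>R cross3 (P(x+l*d)) (Q(x+l*d)))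
             - (X x + (l*b) *\<^sub>R MN))
           - l *\<^sub>R (d *\<^sub>R X' + a *\<^sub>R cross3 (P x) (Q x) + cross3 w (X x) - b *\<^sub>R MN)
    = (X(x+l*d) - X x - (l*d) *\<^sub>R X')
      + (l*a) *\<^sub>R (cross3 (P(x+l*d) - P x) (Q(x+l*d)) + cross3 (P x) (Q(x+l*d) - Q x))
      + (l*1) *\<^sub>R cross3 w (X(x+l*d) - X x)
      + (l*(l*a)) *\<^sub>R cross3 w (cross3 (P(x+l*d)) (Q(x+l*d)))" for l
    by (simp add: vec_eq_iff forall_3 cross3_def vector_def algebra_simps)
  show ?thesis unfolding eq
    by (intro O2_add O1_O2 O0_O2 tay_O2[OF X] O1_add O1_cross O1_cross2 tay_O1[OF P] tay_O1[OF Q]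
        tay_O1[OF X] tay_O0[OF Q] O0_const O1_scale O0_cross tay_O0[OF P])
qed



lemma lagrange3: "inner (cross3 a b) (cross3 c d) = (a \<bullet> c) * (b \<bullet> d) - (a \<bullet> d) * (b \<bullet> c)"
  by (simp add: vec_eq_iff forall_3 cross3_def inner_vec_def sum_3 vector_3 algebra_simps)

lemma triple3: "inner (cross3 w a) b = w \<bullet> cross3 a b"
  by (simp add: vec_eq_iff forall_3 cross3_def inner_vec_def sum_3 vector_3 algebra_simps)

lemma cyc3: "x \<bullet> cross3 y z = y \<bullet> cross3 z x"
  by (simp add: vec_eq_iff forall_3 cross3_def inner_vec_def sum_3 vector_3 algebra_simps)

lemma cramer3: "(a \<bullet> cross3 b d) *\<^sub>R c = (c \<bullet> a) *\<^sub>R cross3 b d + (c \<bullet> b) *\<^sub>R cross3 d a + (c \<bullet> d) *\<^sub>R cross3 a b"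
  by (simp add: vec_eq_iff forall_3 cross3_def inner_vec_def sum_3 vector_3 algebra_simps)

lemma fourterm3: "(a2 \<bullet> cross3 a3 a4) *\<^sub>R a1 - (a3 \<bullet> cross3 a4 a1) *\<^sub>R a2 + (a4 \<bullet> cross3 a1 a2) *\<^sub>R a3 - (a1 \<bullet> cross3 a2 a3) *\<^sub>R a4 = 0"
  by (simp add: vec_eq_iff forall_3 cross3_def inner_vec_def sum_3 vector_3 algebra_simps)



lemma cross_diff_right3: "cross3 w (x - y) = cross3 w x - cross3 w y"
  by (simp add: vec_eq_iff forall_3 cross3_def vector_3 algebra_simps)

lemma scale_solve:
  fixes c n :: "real^3"
  assumes "V \<noteq> 0" "V *\<^sub>R c = y *\<^sub>R n" shows "c = (y/V) *\<^sub>R n"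
proof -
  have "c = inverse V *\<^sub>R (V *\<^sub>R c)" using assms(1) by simp
  also have "\<dots> = inverse V *\<^sub>R (y *\<^sub>R n)" using assms(2) by simp
  also have "\<dots> = (y/V) *\<^sub>R n" by (simp add: field_simps)
  finally show ?thesis .
qed

lemma Qid:
  fixes V1x V2x V3x V4x p11x p13x p14x p21x p23x p31x p32x p33x p41x p43x :: real
  assumes "p11x = 0" "p33x = 0" "p32x + p23x = 0" "p14x + p41x = 0"
    "V2x*p11x - V3x*p21x + V4x*p31x - V1x*p41x = 0" "V2x*p13x - V3x*p23x + V4x*p33x - V1x*p43x = 0"
  shows "V3x*V2x*p21x - V3x*V4x*p32x + V4x*V1x*p43x - V1x*V2x*p14x = - V2x*V4x*(p11x - p13x - p31x + p33x)"
proof -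
  have "V3x*V2x*p21x - V3x*V4x*p32x + V4x*V1x*p43x - V1x*V2x*p14x + V2x*V4x*(p11x - p13x - p31x + p33x)
    = (V2x*V4x+V2x*V2x)*p11x + (V4x*V4x+V2x*V4x)*p33x - V3x*V4x*(p32x+p23x) - V1x*V2x*(p14x+p41x)
      - V2x*(V2x*p11x - V3x*p21x + V4x*p31x - V1x*p41x) - V4x*(V2x*p13x - V3x*p23x + V4x*p33x - V1x*p43x)"
    by (simp add: algebra_simps)
  also have "\<dots> = 0" using assms by simp
  finally show ?thesis by linarith
qed

lemma alg_main:
  fixes a1 a2 a3 a4 b1 b2 b3 b4 wu wv :: "real^3" and du dv k1 k2 k3 k4 :: real
  defines "c1 \<equiv> dv *\<^sub>R b1 + k4 *\<^sub>R cross3 a4 a1 + cross3 wv a1 - k1 *\<^sub>R cross3 a1 a2"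
    and "c3 \<equiv> dv *\<^sub>R b3 + k3 *\<^sub>R cross3 a3 a4 + cross3 wv a3 - k2 *\<^sub>R cross3 a2 a3"
    and "c2 \<equiv> du *\<^sub>R b2 + k2 *\<^sub>R cross3 a2 a3 + cross3 wu a2 - k1 *\<^sub>R cross3 a1 a2"
    and "c4 \<equiv> du *\<^sub>R b4 + k3 *\<^sub>R cross3 a3 a4 + cross3 wu a4 - k4 *\<^sub>R cross3 a4 a1"
  assumes o1: "a1 \<bullet> b1 = 0" and o2: "a2 \<bullet> b2 = 0" and o3: "a3 \<bullet> b3 = 0" and o4: "a4 \<bullet> b4 = 0"
    and adj1: "a2 \<bullet> b1 + a1 \<bullet> b2 = 0" and adj2: "a3 \<bullet> b2 + a2 \<bullet> b3 = 0"
    and adj3: "a4 \<bullet> b3 + a3 \<bullet> b4 = 0" and adj4: "a1 \<bullet> b4 + a4 \<bullet> b1 = 0"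
    and V1: "a1 \<bullet> cross3 a2 a3 \<noteq> 0" and V2: "a2 \<bullet> cross3 a3 a4 \<noteq> 0"
    and V3: "a3 \<bullet> cross3 a4 a1 \<noteq> 0" and V4: "a4 \<bullet> cross3 a1 a2 \<noteq> 0"
    and uu: "(a1 - a3) \<bullet> (b1 - b3) \<noteq> 0"
  shows "(c1 = 0 \<and> c3 = 0 \<and> c2 = 0 \<and> c4 = 0) \<longleftrightarrow>
    ((cross3 wu (a2 - a4) + du *\<^sub>R (b2 - b4) = cross3 wv (a1 - a3) + dv *\<^sub>R (b1 - b3)
      \<and> wu \<bullet> (b2 - b4) = wv \<bullet> (b1 - b3))
    \<and> (k1 = (cross3 a2 a3 \<bullet> wu + (a3 \<bullet> b2) * du) / (a1 \<bullet> cross3 a2 a3)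
      \<and> k2 = (cross3 a3 a4 \<bullet> wv + (b3 \<bullet> a4) * dv) / (a2 \<bullet> cross3 a3 a4)
      \<and> k3 = (cross3 a4 a1 \<bullet> wu + (a1 \<bullet> b4) * du) / (a3 \<bullet> cross3 a1 a4)
      \<and> k4 = (cross3 a1 a2 \<bullet> wv + (b1 \<bullet> a2) * dv) / (a4 \<bullet> cross3 a2 a1)))"
proof -
  define V1' where "V1' = a1 \<bullet> cross3 a2 a3"
  define V2' where "V2' = a2 \<bullet> cross3 a3 a4"
  define V3' where "V3' = a3 \<bullet> cross3 a4 a1"
  define V4' where "V4' = a4 \<bullet> cross3 a1 a2"
  have cy: "a2 \<bullet> cross3 a3 a1 = V1'" "a3 \<bullet> cross3 a4 a2 = V2'" "a4 \<bullet> cross3 a1 a3 = V3'" "a1 \<bullet> cross3 a2 a4 = V4'"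
    unfolding V1'_def V2'_def V3'_def V4'_def by (metis cyc3)+
  have sk: "a3 \<bullet> cross3 a1 a4 = - V3'" "a4 \<bullet> cross3 a2 a1 = - V4'"
    unfolding V3'_def V4'_def by (simp_all add: cross_skew[of a1 a4] cross_skew[of a2 a1])
  have n1: "a1 \<bullet> a1 \<noteq> 0" using V1 by auto
  have n2: "a2 \<bullet> a2 \<noteq> 0" using V1 by auto
  have n3: "a3 \<bullet> a3 \<noteq> 0" using V2 by auto
  have n4: "a4 \<bullet> a4 \<noteq> 0" using V2 by auto
  have o': "b1 \<bullet> a1 = 0" "b2 \<bullet> a2 = 0" "b3 \<bullet> a3 = 0" "b4 \<bullet> a4 = 0"
    using o1 o2 o3 o4 by (simp_all add: inner_commute)
  note dsimps = inner_add_left inner_diff_left inner_scaleR_left triple3 dot_cross_self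
  have c1a1: "c1 \<bullet> a1 = 0" unfolding c1_def using o' by (simp add: dsimps)
  have c2a2: "c2 \<bullet> a2 = 0" unfolding c2_def using o' by (simp add: dsimps)
  have c3a3: "c3 \<bullet> a3 = 0" unfolding c3_def using o' by (simp add: dsimps)
  have c4a4: "c4 \<bullet> a4 = 0" unfolding c4_def using o' by (simp add: dsimps)
  have c1a2: "c1 \<bullet> a2 = dv * (b1 \<bullet> a2) + k4 * V4' + wv \<bullet> cross3 a1 a2"
    unfolding c1_def V4'_def by (simp add: dsimps)
  have c2a3: "c2 \<bullet> a3 = du * (b2 \<bullet> a3) + wu \<bullet> cross3 a2 a3 - k1 * V1'"
    unfolding c2_def V1'_def by (simp add: dsimps)
  have c3a4: "c3 \<bullet> a4 = dv * (b3 \<bullet> a4) + wv \<bullet> cross3 a3 a4 - k2 * V2'"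
    unfolding c3_def V2'_def by (simp add: dsimps)
  have c4a1: "c4 \<bullet> a1 = du * (b4 \<bullet> a1) + k3 * V3' + wu \<bullet> cross3 a4 a1"
    unfolding c4_def V3'_def by (simp add: dsimps)
  have V': "V1' \<noteq> 0" "V2' \<noteq> 0" "V3' \<noteq> 0" "V4' \<noteq> 0" using V1 V2 V3 V4 by (simp_all add: V1'_def V2'_def V3'_def V4'_def)
  have kap1: "k1 = (cross3 a2 a3 \<bullet> wu + (a3 \<bullet> b2) * du) / (a1 \<bullet> cross3 a2 a3) \<longleftrightarrow> c2 \<bullet> a3 = 0"
    unfolding c2a3 V1'_def[symmetric] using V' by (auto simp: field_simps inner_commute)
  have kap2: "k2 = (cross3 a3 a4 \<bullet> wv + (b3 \<bullet> a4) * dv) / (a2 \<bullet> cross3 a3 a4) \<longleftrightarrow> c3 \<bullet> a4 = 0"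
    unfolding c3a4 V2'_def[symmetric] using V' by (auto simp: field_simps inner_commute)
  have kap3: "k3 = (cross3 a4 a1 \<bullet> wu + (a1 \<bullet> b4) * du) / (a3 \<bullet> cross3 a1 a4) \<longleftrightarrow> c4 \<bullet> a1 = 0"
    unfolding c4a1 sk using V' by (auto simp: field_simps inner_commute)
  have kap4: "k4 = (cross3 a1 a2 \<bullet> wv + (b1 \<bullet> a2) * dv) / (a4 \<bullet> cross3 a2 a1) \<longleftrightarrow> c1 \<bullet> a2 = 0"
    unfolding c1a2 sk using V' by (auto simp: field_simps inner_commute)
  have Eid: "c2 - c4 - (c1 - c3) = (cross3 wu (a2 - a4) + du *\<^sub>R (b2 - b4)) - (cross3 wv (a1 - a3) + dv *\<^sub>R (b1 - b3))"
    unfolding c1_def c2_def c3_def c4_def by (simp add: cross_diff_right3 algebra_simps)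
  define S1 where "S1 = - k4 * (a4 \<bullet> b1) - wv \<bullet> b1 - k1 * (a2 \<bullet> b1)"
  define S2 where "S2 = k2 * (a3 \<bullet> b2) - wu \<bullet> b2 + k1 * (a1 \<bullet> b2)"
  define S3 where "S3 = k3 * (a4 \<bullet> b3) - wv \<bullet> b3 + k2 * (a2 \<bullet> b3)"
  define S4 where "S4 = - k3 * (a3 \<bullet> b4) - wu \<bullet> b4 - k4 * (a1 \<bullet> b4)"
  note lsimps = inner_add_left inner_diff_left inner_scaleR_left lagrange3 dot_cross_self
  have S1id: "c1 \<bullet> cross3 a1 b1 = (a1 \<bullet> a1) * S1"
    unfolding c1_def S1_def using o1 o' by (simp add: lsimps algebra_simps inner_commute)
  have S2id: "c2 \<bullet> cross3 a2 b2 = (a2 \<bullet> a2) * S2"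
    unfolding c2_def S2_def using o2 o' by (simp add: lsimps algebra_simps inner_commute)
  have S3id: "c3 \<bullet> cross3 a3 b3 = (a3 \<bullet> a3) * S3"
    unfolding c3_def S3_def using o3 o' by (simp add: lsimps algebra_simps inner_commute)
  have S4id: "c4 \<bullet> cross3 a4 b4 = (a4 \<bullet> a4) * S4"
    unfolding c4_def S4_def using o4 o' by (simp add: lsimps algebra_simps inner_commute)
  have Ssum: "S1 - S2 - S3 + S4 = wu \<bullet> (b2 - b4) - wv \<bullet> (b1 - b3)"
  proof -
    have "S1 - S2 - S3 + S4 = wu \<bullet> (b2 - b4) - wv \<bullet> (b1 - b3)
        - k4 * (a1 \<bullet> b4 + a4 \<bullet> b1) - k1 * (a2 \<bullet> b1 + a1 \<bullet> b2) - k2 * (a3 \<bullet> b2 + a2 \<bullet> b3) - k3 * (a4 \<bullet> b3 + a3 \<bullet> b4)"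
      unfolding S1_def S2_def S3_def S4_def by (simp add: inner_diff_right algebra_simps)
    thus ?thesis using adj1 adj2 adj3 adj4 by simp
  qed
  show ?thesis
  proof
    assume c: "c1 = 0 \<and> c3 = 0 \<and> c2 = 0 \<and> c4 = 0"
    have A1: "cross3 wu (a2 - a4) + du *\<^sub>R (b2 - b4) = cross3 wv (a1 - a3) + dv *\<^sub>R (b1 - b3)"
      using Eid c by simp
    have "S1 = 0" using S1id c n1 by simp
    moreover have "S2 = 0" using S2id c n2 by simp
    moreover have "S3 = 0" using S3id c n3 by simp
    moreover have "S4 = 0" using S4id c n4 by simp
    ultimately have A2: "wu \<bullet> (b2 - b4) = wv \<bullet> (b1 - b3)" using Ssum by simp
    show "((cross3 wu (a2 - a4) + du *\<^sub>R (b2 - b4) = cross3 wv (a1 - a3) + dv *\<^sub>R (b1 - b3)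
      \<and> wu \<bullet> (b2 - b4) = wv \<bullet> (b1 - b3))
    \<and> (k1 = (cross3 a2 a3 \<bullet> wu + (a3 \<bullet> b2) * du) / (a1 \<bullet> cross3 a2 a3)
      \<and> k2 = (cross3 a3 a4 \<bullet> wv + (b3 \<bullet> a4) * dv) / (a2 \<bullet> cross3 a3 a4)
      \<and> k3 = (cross3 a4 a1 \<bullet> wu + (a1 \<bullet> b4) * du) / (a3 \<bullet> cross3 a1 a4)
      \<and> k4 = (cross3 a1 a2 \<bullet> wv + (b1 \<bullet> a2) * dv) / (a4 \<bullet> cross3 a2 a1)))"
      using A1 A2 kap1 kap2 kap3 kap4 c by simp
  next
    assume H: "((cross3 wu (a2 - a4) + du *\<^sub>R (b2 - b4) = cross3 wv (a1 - a3) + dv *\<^sub>R (b1 - b3)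
      \<and> wu \<bullet> (b2 - b4) = wv \<bullet> (b1 - b3))
    \<and> (k1 = (cross3 a2 a3 \<bullet> wu + (a3 \<bullet> b2) * du) / (a1 \<bullet> cross3 a2 a3)
      \<and> k2 = (cross3 a3 a4 \<bullet> wv + (b3 \<bullet> a4) * dv) / (a2 \<bullet> cross3 a3 a4)
      \<and> k3 = (cross3 a4 a1 \<bullet> wu + (a1 \<bullet> b4) * du) / (a3 \<bullet> cross3 a1 a4)
      \<and> k4 = (cross3 a1 a2 \<bullet> wv + (b1 \<bullet> a2) * dv) / (a4 \<bullet> cross3 a2 a1)))"
    have d: "c2 \<bullet> a3 = 0" "c3 \<bullet> a4 = 0" "c4 \<bullet> a1 = 0" "c1 \<bullet> a2 = 0"
      using H kap1 kap2 kap3 kap4 by auto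
    have E0: "c2 - c4 - (c1 - c3) = 0" using H Eid by simp
    have SS: "S1 - S2 - S3 + S4 = 0" using H Ssum by simp
    define z1 where "z1 = (c1 \<bullet> a4) / V4'"
    define z2 where "z2 = (c2 \<bullet> a1) / V1'"
    define z3 where "z3 = (c3 \<bullet> a2) / V2'"
    define z4 where "z4 = (c4 \<bullet> a3) / V3'"
    have ce1: "c1 = z1 *\<^sub>R cross3 a1 a2"
    proof -
      have "V4' *\<^sub>R c1 = (c1 \<bullet> a4) *\<^sub>R cross3 a1 a2"
        using cramer3[of a1 a2 a4 c1] cy c1a1 d by (simp add: inner_commute)
      thus ?thesis using V' unfolding z1_def by (intro scale_solve) auto
    qed
    have ce2: "c2 = z2 *\<^sub>R cross3 a2 a3"
    proof -
      have "V1' *\<^sub>R c2 = (c2 \<bullet> a1) *\<^sub>R cross3 a2 a3"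
        using cramer3[of a2 a3 a1 c2] cy c2a2 d by (simp add: inner_commute)
      thus ?thesis using V' unfolding z2_def by (intro scale_solve) auto
    qed
    have ce3: "c3 = z3 *\<^sub>R cross3 a3 a4"
    proof -
      have "V2' *\<^sub>R c3 = (c3 \<bullet> a2) *\<^sub>R cross3 a3 a4"
        using cramer3[of a3 a4 a2 c3] cy c3a3 d by (simp add: inner_commute)
      thus ?thesis using V' unfolding z3_def by (intro scale_solve) auto
    qed
    have ce4: "c4 = z4 *\<^sub>R cross3 a4 a1"
    proof -
      have "V3' *\<^sub>R c4 = (c4 \<bullet> a3) *\<^sub>R cross3 a4 a1"
        using cramer3[of a4 a1 a3 c4] cy c4a4 d by (simp add: inner_commute)
      thus ?thesis using V' unfolding z4_def by (intro scale_solve) auto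
    qed
    have E1: "z2 *\<^sub>R cross3 a2 a3 - z4 *\<^sub>R cross3 a4 a1 - (z1 *\<^sub>R cross3 a1 a2 - z3 *\<^sub>R cross3 a3 a4) = 0"
      using E0 ce1 ce2 ce3 ce4 by simp
    have e1: "z2 * V1' + z3 * V3' = 0"
      using arg_cong[OF E1, of "\<lambda>x. x \<bullet> a1"] cy by (simp add: dsimps V3'_def)
    have e2: "z3 * V2' - z4 * V4' = 0"
      using arg_cong[OF E1, of "\<lambda>x. x \<bullet> a2"] cy by (simp add: dsimps V4'_def)
    have e3: "- z4 * V3' - z1 * V1' = 0"
      using arg_cong[OF E1, of "\<lambda>x. x \<bullet> a3"] cy by (simp add: dsimps V1'_def)
    have e4: "z2 * V2' - z1 * V4' = 0"
      using arg_cong[OF E1, of "\<lambda>x. x \<bullet> a4"] cy by (simp add: dsimps V2'_def)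
    have s1: "S1 = z1 * (a2 \<bullet> b1)"
    proof -
      have "(a1 \<bullet> a1) * S1 = (a1 \<bullet> a1) * (z1 * (a2 \<bullet> b1))"
        unfolding S1id[symmetric] ce1 using o1 by (simp add: lagrange3 algebra_simps)
      thus ?thesis using n1 by simp
    qed
    have s2: "S2 = z2 * (a3 \<bullet> b2)"
    proof -
      have "(a2 \<bullet> a2) * S2 = (a2 \<bullet> a2) * (z2 * (a3 \<bullet> b2))"
        unfolding S2id[symmetric] ce2 using o2 by (simp add: lagrange3 algebra_simps)
      thus ?thesis using n2 by simp
    qed
    have s3: "S3 = z3 * (a4 \<bullet> b3)"
    proof -
      have "(a3 \<bullet> a3) * S3 = (a3 \<bullet> a3) * (z3 * (a4 \<bullet> b3))"
        unfolding S3id[symmetric] ce3 using o3 by (simp add: lagrange3 algebra_simps)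
      thus ?thesis using n3 by simp
    qed
    have s4: "S4 = z4 * (a1 \<bullet> b4)"
    proof -
      have "(a4 \<bullet> a4) * S4 = (a4 \<bullet> a4) * (z4 * (a1 \<bullet> b4))"
        unfolding S4id[symmetric] ce4 using o4 by (simp add: lagrange3 algebra_simps)
      thus ?thesis using n4 by simp
    qed
    have F: "V2' *\<^sub>R a1 - V3' *\<^sub>R a2 + V4' *\<^sub>R a3 - V1' *\<^sub>R a4 = 0"
      using fourterm3[of a2 a3 a4 a1] unfolding V1'_def V2'_def V3'_def V4'_def .
    have f1: "V2' * (a1 \<bullet> b1) - V3' * (a2 \<bullet> b1) + V4' * (a3 \<bullet> b1) - V1' * (a4 \<bullet> b1) = 0"
      using arg_cong[OF F, of "\<lambda>x. x \<bullet> b1"] by (simp add: inner_add_left inner_diff_left)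
    have f3: "V2' * (a1 \<bullet> b3) - V3' * (a2 \<bullet> b3) + V4' * (a3 \<bullet> b3) - V1' * (a4 \<bullet> b3) = 0"
      using arg_cong[OF F, of "\<lambda>x. x \<bullet> b3"] by (simp add: inner_add_left inner_diff_left)
    have uu': "(a1 - a3) \<bullet> (b1 - b3) = (a1 \<bullet> b1) - (a1 \<bullet> b3) - (a3 \<bullet> b1) + (a3 \<bullet> b3)"
      by (simp add: inner_diff_left inner_diff_right)
    have Q: "V3'*V2'*(a2 \<bullet> b1) - V3'*V4'*(a3 \<bullet> b2) + V4'*V1'*(a4 \<bullet> b3) - V1'*V2'*(a1 \<bullet> b4)
       = - V2'*V4'*((a1 \<bullet> b1) - (a1 \<bullet> b3) - (a3 \<bullet> b1) + (a3 \<bullet> b3))"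
      by (rule Qid[where p41x="a4 \<bullet> b1" and p31x="a3 \<bullet> b1" and p23x="a2 \<bullet> b3" and p13x="a1 \<bullet> b3"])
         (use o1 o3 adj2 adj4 f1 f3 in \<open>simp_all add: algebra_simps\<close>)
    have h: "V2'*z2 = V4'*z1" "V2'*z3 = V4'*z4" "V3'*z4 = -(V1'*z1)" using e2 e3 e4 by (simp_all add: algebra_simps)
    have "V2'*V3'*(S1 - S2 - S3 + S4) = V2'*V3'*z1*(a2 \<bullet> b1) - V3'*(a3 \<bullet> b2)*(V2'*z2) - V3'*(a4 \<bullet> b3)*(V2'*z3) + V2'*(a1 \<bullet> b4)*(V3'*z4)"
      unfolding s1 s2 s3 s4 by (simp add: algebra_simps)
    also have "\<dots> = V2'*V3'*z1*(a2 \<bullet> b1) - V3'*(a3 \<bullet> b2)*(V4'*z1) - V4'*(a4 \<bullet> b3)*(V3'*z4) + V2'*(a1 \<bullet> b4)*(V3'*z4)"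
      unfolding h(1) h(2) by (simp add: algebra_simps)
    also have "\<dots> = z1 * (V3'*V2'*(a2 \<bullet> b1) - V3'*V4'*(a3 \<bullet> b2) + V4'*V1'*(a4 \<bullet> b3) - V1'*V2'*(a1 \<bullet> b4))"
      unfolding h(3) by (simp add: algebra_simps)
    also have "\<dots> = - z1 * V2'*V4'*((a1 - a3) \<bullet> (b1 - b3))" unfolding Q uu' by (simp add: algebra_simps)
    finally have "z1 * V2' * V4' * ((a1 - a3) \<bullet> (b1 - b3)) = 0" using SS by simp
    hence z1: "z1 = 0" using V' uu by simp
    have z2: "z2 = 0" using h(1) z1 V' by simp
    have z4: "z4 = 0" using h(3) z1 V' by simp
    have z3: "z3 = 0" using h(2) z4 V' by simp
    show "c1 = 0 \<and> c3 = 0 \<and> c2 = 0 \<and> c4 = 0" using ce1 ce2 ce3 ce4 z1 z2 z3 z4 by simp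
  qed
qed



lemma moreover_real:
  fixes ua ub va vb pa pb qa qb xa xb xc ya yb yc du dv :: real
  assumes L: "ua * vb - ub * va \<noteq> 0" and pu: "pa * ua + pb * ub \<noteq> 0" and qv: "qa * va + qb * vb \<noteq> 0"
    and uvp: "ua * qa + ub * qb + pa * va + pb * vb = 0"
  shows "(- (xc * vb) + du * qa = - (yc * ub) + dv * pa \<and> xc * va + du * qb = yc * ua + dv * pb
          \<and> xa * vb - xb * va = ya * ub - yb * ua \<and> xa * qa + xb * qb = ya * pa + yb * pb)
    \<longleftrightarrow> (\<exists>k \<tau>. xa = \<tau> * ua + k * (pa * ua + pb * ub) * va \<and> xb = \<tau> * ub + k * (pa * ua + pb * ub) * vb
          \<and> xc = (du * (qa * ua + qb * ub) - dv * (pa * ua + pb * ub))/(ua * vb - ub * va)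
          \<and> ya = k * (qa * va + qb * vb) * ua - \<tau> * va \<and> yb = k * (qa * va + qb * vb) * ub - \<tau> * vb
          \<and> yc = (du * (qa * va + qb * vb) - dv * (pa * va + pb * vb))/(ua * vb - ub * va))"
    (is "?A \<longleftrightarrow> ?B")
proof
  define \<Lambda> where "\<Lambda> = ua * vb - ub * va"
  assume A: ?A
  hence A1: "- (xc * vb) + du * qa = - (yc * ub) + dv * pa" and A2: "xc * va + du * qb = yc * ua + dv * pb"
    and A3: "xa * vb - xb * va = ya * ub - yb * ua" and A4: "xa * qa + xb * qb = ya * pa + yb * pb" by auto
  define \<tau> where "\<tau> = (xa * vb - xb * va)/\<Lambda>"
  define k where "k = (ua * xb - ub * xa)/(\<Lambda> * (pa * ua + pb * ub))"
  have L': "\<Lambda> \<noteq> 0" using L by (simp add: \<Lambda>_def)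
  have kk: "k * (pa * ua + pb * ub) = (ua * xb - ub * xa)/\<Lambda>"
  proof -
    have "k * (pa * ua + pb * ub) = ((ua * xb - ub * xa) * (pa * ua + pb * ub)) / (\<Lambda> * (pa * ua + pb * ub))"
      by (simp add: k_def)
    also have "\<dots> = (ua * xb - ub * xa)/\<Lambda>" using pu by simp
    finally show ?thesis .
  qed
  have tL: "\<tau> * \<Lambda> = xa * vb - xb * va" using L' by (simp add: \<tau>_def)
  have kL: "k * (pa * ua + pb * ub) * \<Lambda> = ua * xb - ub * xa" using L' by (simp add: kk)
  have "(\<tau> * ua + k * (pa * ua + pb * ub) * va) * \<Lambda> = (\<tau> * \<Lambda>) * ua + (k * (pa * ua + pb * ub) * \<Lambda>) * va"
    by (simp add: algebra_simps)
  also have "\<dots> = xa * \<Lambda>" unfolding tL kL by (simp add: \<Lambda>_def algebra_simps)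
  finally have xa: "xa = \<tau> * ua + k * (pa * ua + pb * ub) * va" using L' by simp
  have "(\<tau> * ub + k * (pa * ua + pb * ub) * vb) * \<Lambda> = (\<tau> * \<Lambda>) * ub + (k * (pa * ua + pb * ub) * \<Lambda>) * vb"
    by (simp add: algebra_simps)
  also have "\<dots> = xb * \<Lambda>" unfolding tL kL by (simp add: \<Lambda>_def algebra_simps)
  finally have xb: "xb = \<tau> * ub + k * (pa * ua + pb * ub) * vb" using L' by simp
  have "ua * (- (xc * vb) + du * qa) + ub * (xc * va + du * qb) = ua * (- (yc * ub) + dv * pa) + ub * (yc * ua + dv * pb)"
    using A1 A2 by simp
  hence "xc * \<Lambda> = du * (qa * ua + qb * ub) - dv * (pa * ua + pb * ub)" by (simp add: \<Lambda>_def algebra_simps)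
  hence xc: "xc = (du * (qa * ua + qb * ub) - dv * (pa * ua + pb * ub))/\<Lambda>" using L' by (simp add: field_simps)
  have "va * (- (xc * vb) + du * qa) + vb * (xc * va + du * qb) = va * (- (yc * ub) + dv * pa) + vb * (yc * ua + dv * pb)"
    using A1 A2 by simp
  hence "yc * \<Lambda> = du * (qa * va + qb * vb) - dv * (pa * va + pb * vb)" by (simp add: \<Lambda>_def algebra_simps)
  hence yc: "yc = (du * (qa * va + qb * vb) - dv * (pa * va + pb * vb))/\<Lambda>" using L' by (simp add: field_simps)
  define \<alpha> where "\<alpha> = (ya * vb - yb * va)/\<Lambda>"
  define \<beta> where "\<beta> = (ua * yb - ub * ya)/\<Lambda>"
  have aL: "\<alpha> * \<Lambda> = ya * vb - yb * va" using L' by (simp add: \<alpha>_def)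
  have bL: "\<beta> * \<Lambda> = ua * yb - ub * ya" using L' by (simp add: \<beta>_def)
  have "(\<alpha> * ua + \<beta> * va) * \<Lambda> = (\<alpha> * \<Lambda>) * ua + (\<beta> * \<Lambda>) * va" by (simp add: algebra_simps)
  also have "\<dots> = ya * \<Lambda>" unfolding aL bL by (simp add: \<Lambda>_def algebra_simps)
  finally have ya: "ya = \<alpha> * ua + \<beta> * va" using L' by simp
  have "(\<alpha> * ub + \<beta> * vb) * \<Lambda> = (\<alpha> * \<Lambda>) * ub + (\<beta> * \<Lambda>) * vb" by (simp add: algebra_simps)
  also have "\<dots> = yb * \<Lambda>" unfolding aL bL by (simp add: \<Lambda>_def algebra_simps)
  finally have yb: "yb = \<alpha> * ub + \<beta> * vb" using L' by simp
  have "\<tau> * \<Lambda> = xa * vb - xb * va" by (rule tL)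
  also have "\<dots> = ya * ub - yb * ua" by (rule A3)
  also have "\<dots> = -\<beta> * \<Lambda>" using bL by (simp add: algebra_simps)
  finally have "\<tau> * \<Lambda> = (-\<beta>) * \<Lambda>" .
  hence b: "\<beta> = -\<tau>" using L' mult_cancel_right[of \<tau> \<Lambda> "-\<beta>"] by simp
  have "\<tau> * (ua * qa + ub * qb) + k * (pa * ua + pb * ub) * (qa * va + qb * vb) = xa * qa + xb * qb"
    by (simp add: xa xb algebra_simps)
  also have "\<dots> = ya * pa + yb * pb" by (rule A4)
  also have "\<dots> = \<alpha> * (pa * ua + pb * ub) + \<beta> * (pa * va + pb * vb)" by (simp add: ya yb algebra_simps)
  finally have "\<alpha> * (pa * ua + pb * ub) = k * (pa * ua + pb * ub) * (qa * va + qb * vb) + \<tau> * (ua * qa + ub * qb + pa * va + pb * vb)"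
    unfolding b by (simp add: algebra_simps)
  hence "\<alpha> * (pa * ua + pb * ub) = k * (pa * ua + pb * ub) * (qa * va + qb * vb)" using uvp by simp
  hence "\<alpha> * (pa * ua + pb * ub) = (k * (qa * va + qb * vb)) * (pa * ua + pb * ub)" by (simp add: algebra_simps)
  hence a: "\<alpha> = k * (qa * va + qb * vb)" using pu by simp
  show ?B
    by (rule exI[of _ k], rule exI[of _ \<tau>]) (use xa xb xc yc ya yb a b in \<open>simp add: \<Lambda>_def\<close>)
next
  assume ?B
  then obtain k \<tau> where xa: "xa = \<tau> * ua + k * (pa * ua + pb * ub) * va" and xb: "xb = \<tau> * ub + k * (pa * ua + pb * ub) * vb"
          and xc: "xc = (du * (qa * ua + qb * ub) - dv * (pa * ua + pb * ub))/(ua * vb - ub * va)"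
          and ya: "ya = k * (qa * va + qb * vb) * ua - \<tau> * va" and yb: "yb = k * (qa * va + qb * vb) * ub - \<tau> * vb"
          and yc: "yc = (du * (qa * va + qb * vb) - dv * (pa * va + pb * vb))/(ua * vb - ub * va)" by blast
  have A1: "- (xc * vb) + du * qa = - (yc * ub) + dv * pa"
    unfolding xc yc using L by (simp add: field_simps)
  have A2: "xc * va + du * qb = yc * ua + dv * pb"
    unfolding xc yc using L by (simp add: field_simps)
  have A3: "xa * vb - xb * va = ya * ub - yb * ua"
    unfolding xa xb ya yb by (simp add: algebra_simps)
  have "xa * qa + xb * qb - (ya * pa + yb * pb) = \<tau> * (ua * qa + ub * qb + pa * va + pb * vb)"
    unfolding xa xb ya yb by (simp add: algebra_simps)
  hence A4: "xa * qa + xb * qb = ya * pa + yb * pb" using uvp by simp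
  show ?A using A1 A2 A3 A4 by blast
qed


lemma moreover_vec:
  fixes u v p q x y :: "real^3"
  assumes u3: "u \<bullet> e3 = 0" and v3: "v \<bullet> e3 = 0" and p3: "p \<bullet> e3 = 0" and q3: "q \<bullet> e3 = 0"
    and L: "e3 \<bullet> cross3 u v > 0" and pu: "p \<bullet> u \<noteq> 0" and qv: "q \<bullet> v \<noteq> 0"
    and uvp: "u \<bullet> q + p \<bullet> v = 0"
  shows "(cross3 x v + du *\<^sub>R q = cross3 y u + dv *\<^sub>R p \<and> x \<bullet> q = y \<bullet> p) \<longleftrightarrow>
    (\<exists>k \<tau>. x = \<tau> *\<^sub>R u + (k * (p \<bullet> u)) *\<^sub>R v + ((du * (q \<bullet> u) - dv * (p \<bullet> u)) / (e3 \<bullet> cross3 u v)) *\<^sub>R e3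
        \<and> y = (k * (q \<bullet> v)) *\<^sub>R u - \<tau> *\<^sub>R v + ((du * (q \<bullet> v) - dv * (p \<bullet> v)) / (e3 \<bullet> cross3 u v)) *\<^sub>R e3)"
proof -
  have e: "z \<bullet> e3 = z$3" for z :: "real^3" by (simp add: e3_def inner_vec_def sum_3 axis_def)
  have c3: "u$3 = 0" "v$3 = 0" "p$3 = 0" "q$3 = 0" using u3 v3 p3 q3 e by auto
  have Le: "e3 \<bullet> cross3 u v = u$1 * v$2 - u$2 * v$1" by (simp add: e3_def cross3_def inner_vec_def sum_3 axis_def vector_3)
  have ip: "a \<bullet> b = a$1 * b$1 + a$2 * b$2" if "b$3 = 0" for a b :: "real^3"
    using that by (simp add: inner_vec_def sum_3)
  have pu': "p \<bullet> u = p$1 * u$1 + p$2 * u$2" by (rule ip) (rule c3)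
  have qv': "q \<bullet> v = q$1 * v$1 + q$2 * v$2" by (rule ip) (rule c3)
  have qu': "q \<bullet> u = q$1 * u$1 + q$2 * u$2" by (rule ip) (rule c3)
  have pv': "p \<bullet> v = p$1 * v$1 + p$2 * v$2" by (rule ip) (rule c3)
  have xq: "x \<bullet> q = x$1 * q$1 + x$2 * q$2" by (rule ip) (rule c3)
  have yp: "y \<bullet> p = y$1 * p$1 + y$2 * p$2" by (rule ip) (rule c3)
  have uq: "u \<bullet> q = u$1 * q$1 + u$2 * q$2" by (rule ip) (rule c3)
  have R: "(- (x$3 * v$2) + du * q$1 = - (y$3 * u$2) + dv * p$1 \<and> x$3 * v$1 + du * q$2 = y$3 * u$1 + dv * p$2
          \<and> x$1 * v$2 - x$2 * v$1 = y$1 * u$2 - y$2 * u$1 \<and> x$1 * q$1 + x$2 * q$2 = y$1 * p$1 + y$2 * p$2)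
    \<longleftrightarrow> (\<exists>k \<tau>. x$1 = \<tau> * u$1 + k * (p$1 * u$1 + p$2 * u$2) * v$1 \<and> x$2 = \<tau> * u$2 + k * (p$1 * u$1 + p$2 * u$2) * v$2
          \<and> x$3 = (du * (q$1 * u$1 + q$2 * u$2) - dv * (p$1 * u$1 + p$2 * u$2))/(u$1 * v$2 - u$2 * v$1)
          \<and> y$1 = k * (q$1 * v$1 + q$2 * v$2) * u$1 - \<tau> * v$1 \<and> y$2 = k * (q$1 * v$1 + q$2 * v$2) * u$2 - \<tau> * v$2
          \<and> y$3 = (du * (q$1 * v$1 + q$2 * v$2) - dv * (p$1 * v$1 + p$2 * v$2))/(u$1 * v$2 - u$2 * v$1))"
    by (rule moreover_real) (use L Le pu pu' qv qv' uvp uq pv' in auto)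
  have lhs: "(cross3 x v + du *\<^sub>R q = cross3 y u + dv *\<^sub>R p \<and> x \<bullet> q = y \<bullet> p) \<longleftrightarrow>
     (- (x$3 * v$2) + du * q$1 = - (y$3 * u$2) + dv * p$1 \<and> x$3 * v$1 + du * q$2 = y$3 * u$1 + dv * p$2
          \<and> x$1 * v$2 - x$2 * v$1 = y$1 * u$2 - y$2 * u$1 \<and> x$1 * q$1 + x$2 * q$2 = y$1 * p$1 + y$2 * p$2)"
    unfolding xq yp by (simp add: vec_eq_iff forall_3 cross3_def vector_3 c3 algebra_simps)
  have rhs: "(\<exists>k \<tau>. x = \<tau> *\<^sub>R u + (k * (p \<bullet> u)) *\<^sub>R v + ((du * (q \<bullet> u) - dv * (p \<bullet> u)) / (e3 \<bullet> cross3 u v)) *\<^sub>R e3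
        \<and> y = (k * (q \<bullet> v)) *\<^sub>R u - \<tau> *\<^sub>R v + ((du * (q \<bullet> v) - dv * (p \<bullet> v)) / (e3 \<bullet> cross3 u v)) *\<^sub>R e3)
     \<longleftrightarrow> (\<exists>k \<tau>. x$1 = \<tau> * u$1 + k * (p$1 * u$1 + p$2 * u$2) * v$1 \<and> x$2 = \<tau> * u$2 + k * (p$1 * u$1 + p$2 * u$2) * v$2
          \<and> x$3 = (du * (q$1 * u$1 + q$2 * u$2) - dv * (p$1 * u$1 + p$2 * u$2))/(u$1 * v$2 - u$2 * v$1)
          \<and> y$1 = k * (q$1 * v$1 + q$2 * v$2) * u$1 - \<tau> * v$1 \<and> y$2 = k * (q$1 * v$1 + q$2 * v$2) * u$2 - \<tau> * v$2
          \<and> y$3 = (du * (q$1 * v$1 + q$2 * v$2) - dv * (p$1 * v$1 + p$2 * v$2))/(u$1 * v$2 - u$2 * v$1))"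
    unfolding Le pu' qv' qu' pv' by (simp add: vec_eq_iff forall_3 c3 e3_def axis_def conj_ac)
  show ?thesis unfolding lhs rhs R ..
qed


lemma deriv_inner:
  fixes f g :: "real \<Rightarrow> real^3"
  assumes "(f has_vector_derivative f') (at x)" "(g has_vector_derivative g') (at x)"
  shows "((\<lambda>s. f s \<bullet> g s) has_field_derivative (f x \<bullet> g' + f' \<bullet> g x)) (at x)"
proof -
  have "((\<lambda>s. f s \<bullet> g s) has_derivative (\<lambda>h. f x \<bullet> (h *\<^sub>R g') + (h *\<^sub>R f') \<bullet> g x)) (at x)"
    using assms unfolding has_vector_derivative_def by (rule has_derivative_inner)
  thus ?thesis unfolding has_field_derivative_def
    by (rule has_derivative_eq_rhs) (auto simp: algebra_simps)
qed

theorem mainTheorem8: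
  fixes t :: "nat \<Rightarrow> real \<Rightarrow> real^3"
    and th_minus th_plus \<theta> d\<theta>u d\<theta>v :: real
    and \<kappa> :: "real^4" and \<omega>u \<omega>v :: "real^3"
  defines "I \<equiv> {th_minus<..<th_plus}"
    and "t' \<equiv> (\<lambda>i s. vector_derivative (t i) (at s))"
    and "u \<equiv> (\<lambda>s. t 1 s - t 3 s)"
    and "v \<equiv> (\<lambda>s. t 2 s - t 4 s)"
    and "u' \<equiv> (\<lambda>s. vector_derivative (\<lambda>r. t 1 r - t 3 r) (at s))"
    and "v' \<equiv> (\<lambda>s. vector_derivative (\<lambda>r. t 2 r - t 4 r) (at s))"
  assumes interval: "th_minus < 0" "0 < th_plus" "\<theta> \<in> I"
    and analytic: "\<forall>i\<in>{1..4}. real_analytic_on (t i) I"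
    and lengths: "\<forall>i\<in>{1..4}. \<forall>s\<in>I. norm (t i s) = norm (t i 0)"
    and angles: "\<forall>s\<in>I. t 1 s \<bullet> t 2 s = t 1 0 \<bullet> t 2 0 \<and> t 2 s \<bullet> t 3 s = t 2 0 \<bullet> t 3 0
                       \<and> t 3 s \<bullet> t 4 s = t 3 0 \<bullet> t 4 0 \<and> t 4 s \<bullet> t 1 s = t 4 0 \<bullet> t 1 0"
    and design_nondeg: "\<forall>(i,j,k)\<in>{(1,2,3),(2,3,4),(3,4,1),(4,1,2)}. Vtp t i j k 0 \<noteq> 0"
    and signs: "\<forall>(i,j,k)\<in>{(1,2,3),(2,3,4),(3,4,1),(4,1,2)}. \<forall>s\<in>I.
                  sgn (Vtp t i j k s) = sgn (Vtp t i j k 0)"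
    and normalization: "\<forall>s\<in>I. u s \<bullet> e3 = 0 \<and> v s \<bullet> e3 = 0 \<and> e3 \<bullet> cross3 (u s) (v s) > 0"
    and uv_regular: "\<forall>s\<in>I. u' s \<bullet> u s \<noteq> 0 \<and> v' s \<bullet> v s \<noteq> 0"
    and V_nonzero: "\<forall>s\<in>I. \<forall>i\<in>{1..4}. \<forall>j\<in>{1..4}. \<forall>k\<in>{1..4}.
                      distinct [i, j, k] \<longrightarrow> Vtp t i j k s \<noteq> 0"
  shows "((bigO2 (\<lambda>l. nbr \<omega>v d\<theta>v (tm1 t \<kappa>) l \<theta> - tp1 t \<kappa> l \<theta>)
          \<and> bigO2 (\<lambda>l. nbr \<omega>v d\<theta>v (tm3 t \<kappa>) l \<theta> - tp3 t \<kappa> l \<theta>)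
          \<and> bigO2 (\<lambda>l. nbr \<omega>u d\<theta>u (tm2 t \<kappa>) l \<theta> - tp2 t \<kappa> l \<theta>)
          \<and> bigO2 (\<lambda>l. nbr \<omega>u d\<theta>u (tm4 t \<kappa>) l \<theta> - tp4 t \<kappa> l \<theta>))
         \<longleftrightarrow>
         ((cross3 \<omega>u (v \<theta>) + d\<theta>u *\<^sub>R v' \<theta> = cross3 \<omega>v (u \<theta>) + d\<theta>v *\<^sub>R u' \<theta>
           \<and> \<omega>u \<bullet> v' \<theta> = \<omega>v \<bullet> u' \<theta>)
          \<and> (\<kappa>$1 = (cross3 (t 2 \<theta>) (t 3 \<theta>) \<bullet> \<omega>u + (t 3 \<theta> \<bullet> t' 2 \<theta>) * d\<theta>u) / Vtp t 1 2 3 \<theta>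
           \<and> \<kappa>$2 = (cross3 (t 3 \<theta>) (t 4 \<theta>) \<bullet> \<omega>v + (t' 3 \<theta> \<bullet> t 4 \<theta>) * d\<theta>v) / Vtp t 2 3 4 \<theta>
           \<and> \<kappa>$3 = (cross3 (t 4 \<theta>) (t 1 \<theta>) \<bullet> \<omega>u + (t 1 \<theta> \<bullet> t' 4 \<theta>) * d\<theta>u) / Vtp t 3 1 4 \<theta>
           \<and> \<kappa>$4 = (cross3 (t 1 \<theta>) (t 2 \<theta>) \<bullet> \<omega>v + (t' 1 \<theta> \<bullet> t 2 \<theta>) * d\<theta>v) / Vtp t 4 2 1 \<theta>)))
    \<and> ((cross3 \<omega>u (v \<theta>) + d\<theta>u *\<^sub>R v' \<theta> = cross3 \<omega>v (u \<theta>) + d\<theta>v *\<^sub>R u' \<theta>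
           \<and> \<omega>u \<bullet> v' \<theta> = \<omega>v \<bullet> u' \<theta>)
         \<longleftrightarrow>
         (\<exists>k \<tau> :: real.
            \<omega>u = \<tau> *\<^sub>R u \<theta> + (k * (u' \<theta> \<bullet> u \<theta>)) *\<^sub>R v \<theta>
                 + ((d\<theta>u * (v' \<theta> \<bullet> u \<theta>) - d\<theta>v * (u' \<theta> \<bullet> u \<theta>)) / (e3 \<bullet> cross3 (u \<theta>) (v \<theta>))) *\<^sub>R e3
          \<and> \<omega>v = (k * (v' \<theta> \<bullet> v \<theta>)) *\<^sub>R u \<theta> - \<tau> *\<^sub>R v \<theta>
                 + ((d\<theta>u * (v' \<theta> \<bullet> v \<theta>) - d\<theta>v * (u' \<theta> \<bullet> v \<theta>)) / (e3 \<bullet> cross3 (u \<theta>) (v \<theta>))) *\<^sub>R e3))"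
  proof -
  have thI: "\<theta> \<in> {th_minus<..<th_plus}" using interval(3) unfolding I_def .
  have tay: "tay (t i) \<theta> (t' i \<theta>)" if "i \<in> {1..4}" for i
  proof -
    from analytic that thI obtain r c where rc: "r > 0" "\<forall>y. \<bar>y - \<theta>\<bar> < r \<longrightarrow> (\<lambda>n. (y - \<theta>)^n *\<^sub>R c n) sums t i y"
      unfolding real_analytic_on_def I_def by blast
    have T: "tay (t i) \<theta> (c 1)" by (rule analytic_tay[OF rc(2) rc(1)])
    have "t' i \<theta> = c 1" unfolding t'_def using vector_derivative_at[OF tay_deriv[OF T]] by simp
    thus ?thesis using T by simp
  qed
  have T1: "tay (t 1) \<theta> (t' 1 \<theta>)" using tay[of 1] by simp
  have T2: "tay (t 2) \<theta> (t' 2 \<theta>)" using tay[of 2] by simp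
  have T3: "tay (t 3) \<theta> (t' 3 \<theta>)" using tay[of 3] by simp
  have T4: "tay (t 4) \<theta> (t' 4 \<theta>)" using tay[of 4] by simp
  note D1 = tay_deriv[OF T1] and D2 = tay_deriv[OF T2] and D3 = tay_deriv[OF T3] and D4 = tay_deriv[OF T4]
  have up: "u' \<theta> = t' 1 \<theta> - t' 3 \<theta>" unfolding u'_def
    by (rule vector_derivative_at) (intro has_vector_derivative_diff D1 D3)
  have vp: "v' \<theta> = t' 2 \<theta> - t' 4 \<theta>" unfolding v'_def
    by (rule vector_derivative_at) (intro has_vector_derivative_diff D2 D4)
  have cz: "Dv = 0" if "(f has_field_derivative Dv) (at \<theta>)" "\<forall>s\<in>I. f s = C" for f Dv C
  proof (rule DERIV_local_const[OF that(1), of "min (\<theta> - th_minus) (th_plus - \<theta>)"])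
    show "0 < min (\<theta> - th_minus) (th_plus - \<theta>)" using thI by simp
    show "\<forall>y. \<bar>\<theta> - y\<bar> < min (\<theta> - th_minus) (th_plus - \<theta>) \<longrightarrow> f \<theta> = f y"
    proof (intro allI impI)
      fix y assume "\<bar>\<theta> - y\<bar> < min (\<theta> - th_minus) (th_plus - \<theta>)"
      hence "y \<in> I" unfolding I_def by auto
      thus "f \<theta> = f y" using that(2) interval(3) by auto
    qed
  qed
  note dinner = deriv_inner[where x=\<theta>]
  have selfc: "\<forall>s\<in>I. t i s \<bullet> t i s = (norm (t i 0))^2" if "i \<in> {1..4}" for i
    using lengths that by (simp add: power2_norm_eq_inner[symmetric])
  have o1: "t 1 \<theta> \<bullet> t' 1 \<theta> = 0" using cz[OF dinner[OF D1 D1] selfc[of 1]] by (simp add: inner_commute)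
  have o2: "t 2 \<theta> \<bullet> t' 2 \<theta> = 0" using cz[OF dinner[OF D2 D2] selfc[of 2]] by (simp add: inner_commute)
  have o3: "t 3 \<theta> \<bullet> t' 3 \<theta> = 0" using cz[OF dinner[OF D3 D3] selfc[of 3]] by (simp add: inner_commute)
  have o4: "t 4 \<theta> \<bullet> t' 4 \<theta> = 0" using cz[OF dinner[OF D4 D4] selfc[of 4]] by (simp add: inner_commute)
  have g12: "t 1 \<theta> \<bullet> t' 2 \<theta> + t' 1 \<theta> \<bullet> t 2 \<theta> = 0" using cz[OF dinner[OF D1 D2], of "t 1 0 \<bullet> t 2 0"] angles by auto
  have g23: "t 2 \<theta> \<bullet> t' 3 \<theta> + t' 2 \<theta> \<bullet> t 3 \<theta> = 0" using cz[OF dinner[OF D2 D3], of "t 2 0 \<bullet> t 3 0"] angles by auto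
  have g34: "t 3 \<theta> \<bullet> t' 4 \<theta> + t' 3 \<theta> \<bullet> t 4 \<theta> = 0" using cz[OF dinner[OF D3 D4], of "t 3 0 \<bullet> t 4 0"] angles by auto
  have g41: "t 4 \<theta> \<bullet> t' 1 \<theta> + t' 4 \<theta> \<bullet> t 1 \<theta> = 0" using cz[OF dinner[OF D4 D1], of "t 4 0 \<bullet> t 1 0"] angles by auto
  have De3: "((\<lambda>s. e3) has_vector_derivative 0) (at \<theta>)" by (rule has_vector_derivative_const)
  have pe: "u' \<theta> \<bullet> e3 = 0"
  proof -
    have "((\<lambda>s. (t 1 s - t 3 s) \<bullet> e3) has_field_derivative ((t 1 \<theta> - t 3 \<theta>) \<bullet> 0 + (t' 1 \<theta> - t' 3 \<theta>) \<bullet> e3)) (at \<theta>)"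
      by (rule dinner[OF has_vector_derivative_diff[OF D1 D3] De3])
    from cz[OF this, of 0] normalization show ?thesis unfolding up u_def by simp
  qed
  have qe: "v' \<theta> \<bullet> e3 = 0"
  proof -
    have "((\<lambda>s. (t 2 s - t 4 s) \<bullet> e3) has_field_derivative ((t 2 \<theta> - t 4 \<theta>) \<bullet> 0 + (t' 2 \<theta> - t' 4 \<theta>) \<bullet> e3)) (at \<theta>)"
      by (rule dinner[OF has_vector_derivative_diff[OF D2 D4] De3])
    from cz[OF this, of 0] normalization show ?thesis unfolding vp v_def by simp
  qed
  have K1: "bigO2 (\<lambda>l. nbr \<omega>v d\<theta>v (tm1 t \<kappa>) l \<theta> - tp1 t \<kappa> l \<theta>) \<longleftrightarrow>
      d\<theta>v *\<^sub>R t' 1 \<theta> + (\<kappa>$4) *\<^sub>R cross3 (t 4 \<theta>) (t 1 \<theta>) + cross3 \<omega>v (t 1 \<theta>) - (\<kappa>$1) *\<^sub>R cross3 (t 1 \<theta>) (t 2 \<theta>) = 0"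
    apply (rule O2_coeff) unfolding nbr_def tm1_def tp1_def by (rule key_expand[OF T1 T4 T1])
  have K3: "bigO2 (\<lambda>l. nbr \<omega>v d\<theta>v (tm3 t \<kappa>) l \<theta> - tp3 t \<kappa> l \<theta>) \<longleftrightarrow>
      d\<theta>v *\<^sub>R t' 3 \<theta> + (\<kappa>$3) *\<^sub>R cross3 (t 3 \<theta>) (t 4 \<theta>) + cross3 \<omega>v (t 3 \<theta>) - (\<kappa>$2) *\<^sub>R cross3 (t 2 \<theta>) (t 3 \<theta>) = 0"
    apply (rule O2_coeff) unfolding nbr_def tm3_def tp3_def by (rule key_expand[OF T3 T3 T4])
  have K2: "bigO2 (\<lambda>l. nbr \<omega>u d\<theta>u (tm2 t \<kappa>) l \<theta> - tp2 t \<kappa> l \<theta>) \<longleftrightarrow>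
      d\<theta>u *\<^sub>R t' 2 \<theta> + (\<kappa>$2) *\<^sub>R cross3 (t 2 \<theta>) (t 3 \<theta>) + cross3 \<omega>u (t 2 \<theta>) - (\<kappa>$1) *\<^sub>R cross3 (t 1 \<theta>) (t 2 \<theta>) = 0"
    apply (rule O2_coeff) unfolding nbr_def tm2_def tp2_def by (rule key_expand[OF T2 T2 T3])
  have K4: "bigO2 (\<lambda>l. nbr \<omega>u d\<theta>u (tm4 t \<kappa>) l \<theta> - tp4 t \<kappa> l \<theta>) \<longleftrightarrow>
      d\<theta>u *\<^sub>R t' 4 \<theta> + (\<kappa>$3) *\<^sub>R cross3 (t 3 \<theta>) (t 4 \<theta>) + cross3 \<omega>u (t 4 \<theta>) - (\<kappa>$4) *\<^sub>R cross3 (t 4 \<theta>) (t 1 \<theta>) = 0"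
    apply (rule O2_coeff) unfolding nbr_def tm4_def tp4_def by (rule key_expand[OF T4 T3 T4])
  have Vn: "Vtp t i j k \<theta> \<noteq> 0" if "i \<in> {1..4}" "j \<in> {1..4}" "k \<in> {1..4}" "distinct [i,j,k]" for i j k
    using V_nonzero interval(3) that by blast
  have V1: "t 1 \<theta> \<bullet> cross3 (t 2 \<theta>) (t 3 \<theta>) \<noteq> 0" using Vn[of 1 2 3] by (simp add: Vtp_def)
  have V2: "t 2 \<theta> \<bullet> cross3 (t 3 \<theta>) (t 4 \<theta>) \<noteq> 0" using Vn[of 2 3 4] by (simp add: Vtp_def)
  have V3: "t 3 \<theta> \<bullet> cross3 (t 4 \<theta>) (t 1 \<theta>) \<noteq> 0" using Vn[of 3 4 1] by (simp add: Vtp_def)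
  have V4: "t 4 \<theta> \<bullet> cross3 (t 1 \<theta>) (t 2 \<theta>) \<noteq> 0" using Vn[of 4 1 2] by (simp add: Vtp_def)
  have reg: "u' \<theta> \<bullet> u \<theta> \<noteq> 0" "v' \<theta> \<bullet> v \<theta> \<noteq> 0" using uv_regular interval(3) by auto
  have uu: "(t 1 \<theta> - t 3 \<theta>) \<bullet> (t' 1 \<theta> - t' 3 \<theta>) \<noteq> 0" using reg(1) unfolding up u_def by (simp add: inner_commute)
  have main1: "(d\<theta>v *\<^sub>R t' 1 \<theta> + (\<kappa>$4) *\<^sub>R cross3 (t 4 \<theta>) (t 1 \<theta>) + cross3 \<omega>v (t 1 \<theta>) - (\<kappa>$1) *\<^sub>R cross3 (t 1 \<theta>) (t 2 \<theta>) = 0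
     \<and> d\<theta>v *\<^sub>R t' 3 \<theta> + (\<kappa>$3) *\<^sub>R cross3 (t 3 \<theta>) (t 4 \<theta>) + cross3 \<omega>v (t 3 \<theta>) - (\<kappa>$2) *\<^sub>R cross3 (t 2 \<theta>) (t 3 \<theta>) = 0
     \<and> d\<theta>u *\<^sub>R t' 2 \<theta> + (\<kappa>$2) *\<^sub>R cross3 (t 2 \<theta>) (t 3 \<theta>) + cross3 \<omega>u (t 2 \<theta>) - (\<kappa>$1) *\<^sub>R cross3 (t 1 \<theta>) (t 2 \<theta>) = 0
     \<and> d\<theta>u *\<^sub>R t' 4 \<theta> + (\<kappa>$3) *\<^sub>R cross3 (t 3 \<theta>) (t 4 \<theta>) + cross3 \<omega>u (t 4 \<theta>) - (\<kappa>$4) *\<^sub>R cross3 (t 4 \<theta>) (t 1 \<theta>) = 0)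
    \<longleftrightarrow> ((cross3 \<omega>u (t 2 \<theta> - t 4 \<theta>) + d\<theta>u *\<^sub>R (t' 2 \<theta> - t' 4 \<theta>) = cross3 \<omega>v (t 1 \<theta> - t 3 \<theta>) + d\<theta>v *\<^sub>R (t' 1 \<theta> - t' 3 \<theta>)
      \<and> \<omega>u \<bullet> (t' 2 \<theta> - t' 4 \<theta>) = \<omega>v \<bullet> (t' 1 \<theta> - t' 3 \<theta>))
    \<and> (\<kappa>$1 = (cross3 (t 2 \<theta>) (t 3 \<theta>) \<bullet> \<omega>u + (t 3 \<theta> \<bullet> t' 2 \<theta>) * d\<theta>u) / (t 1 \<theta> \<bullet> cross3 (t 2 \<theta>) (t 3 \<theta>))
      \<and> \<kappa>$2 = (cross3 (t 3 \<theta>) (t 4 \<theta>) \<bullet> \<omega>v + (t' 3 \<theta> \<bullet> t 4 \<theta>) * d\<theta>v) / (t 2 \<theta> \<bullet> cross3 (t 3 \<theta>) (t 4 \<theta>))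
      \<and> \<kappa>$3 = (cross3 (t 4 \<theta>) (t 1 \<theta>) \<bullet> \<omega>u + (t 1 \<theta> \<bullet> t' 4 \<theta>) * d\<theta>u) / (t 3 \<theta> \<bullet> cross3 (t 1 \<theta>) (t 4 \<theta>))
      \<and> \<kappa>$4 = (cross3 (t 1 \<theta>) (t 2 \<theta>) \<bullet> \<omega>v + (t' 1 \<theta> \<bullet> t 2 \<theta>) * d\<theta>v) / (t 4 \<theta> \<bullet> cross3 (t 2 \<theta>) (t 1 \<theta>))))"
    by (rule alg_main) (use o1 o2 o3 o4 g12 g23 g34 g41 V1 V2 V3 V4 uu in \<open>simp_all add: inner_commute\<close>)
  have part1: "((bigO2 (\<lambda>l. nbr \<omega>v d\<theta>v (tm1 t \<kappa>) l \<theta> - tp1 t \<kappa> l \<theta>)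
          \<and> bigO2 (\<lambda>l. nbr \<omega>v d\<theta>v (tm3 t \<kappa>) l \<theta> - tp3 t \<kappa> l \<theta>)
          \<and> bigO2 (\<lambda>l. nbr \<omega>u d\<theta>u (tm2 t \<kappa>) l \<theta> - tp2 t \<kappa> l \<theta>)
          \<and> bigO2 (\<lambda>l. nbr \<omega>u d\<theta>u (tm4 t \<kappa>) l \<theta> - tp4 t \<kappa> l \<theta>))
         \<longleftrightarrow>
         ((cross3 \<omega>u (v \<theta>) + d\<theta>u *\<^sub>R v' \<theta> = cross3 \<omega>v (u \<theta>) + d\<theta>v *\<^sub>R u' \<theta>
           \<and> \<omega>u \<bullet> v' \<theta> = \<omega>v \<bullet> u' \<theta>)
          \<and> (\<kappa>$1 = (cross3 (t 2 \<theta>) (t 3 \<theta>) \<bullet> \<omega>u + (t 3 \<theta> \<bullet> t' 2 \<theta>) * d\<theta>u) / Vtp t 1 2 3 \<theta>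
           \<and> \<kappa>$2 = (cross3 (t 3 \<theta>) (t 4 \<theta>) \<bullet> \<omega>v + (t' 3 \<theta> \<bullet> t 4 \<theta>) * d\<theta>v) / Vtp t 2 3 4 \<theta>
           \<and> \<kappa>$3 = (cross3 (t 4 \<theta>) (t 1 \<theta>) \<bullet> \<omega>u + (t 1 \<theta> \<bullet> t' 4 \<theta>) * d\<theta>u) / Vtp t 3 1 4 \<theta>
           \<and> \<kappa>$4 = (cross3 (t 1 \<theta>) (t 2 \<theta>) \<bullet> \<omega>v + (t' 1 \<theta> \<bullet> t 2 \<theta>) * d\<theta>v) / Vtp t 4 2 1 \<theta>)))"
    unfolding K1 K2 K3 K4 up vp unfolding u_def v_def Vtp_def by (rule main1)
  have part2: "((cross3 \<omega>u (v \<theta>) + d\<theta>u *\<^sub>R v' \<theta> = cross3 \<omega>v (u \<theta>) + d\<theta>v *\<^sub>R u' \<theta>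
           \<and> \<omega>u \<bullet> v' \<theta> = \<omega>v \<bullet> u' \<theta>)
         \<longleftrightarrow>
         (\<exists>k \<tau> :: real.
            \<omega>u = \<tau> *\<^sub>R u \<theta> + (k * (u' \<theta> \<bullet> u \<theta>)) *\<^sub>R v \<theta>
                 + ((d\<theta>u * (v' \<theta> \<bullet> u \<theta>) - d\<theta>v * (u' \<theta> \<bullet> u \<theta>)) / (e3 \<bullet> cross3 (u \<theta>) (v \<theta>))) *\<^sub>R e3
          \<and> \<omega>v = (k * (v' \<theta> \<bullet> v \<theta>)) *\<^sub>R u \<theta> - \<tau> *\<^sub>R v \<theta>
                 + ((d\<theta>u * (v' \<theta> \<bullet> v \<theta>) - d\<theta>v * (u' \<theta> \<bullet> v \<theta>)) / (e3 \<bullet> cross3 (u \<theta>) (v \<theta>))) *\<^sub>R e3))"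
  proof (rule moreover_vec)
    show "u \<theta> \<bullet> e3 = 0" "v \<theta> \<bullet> e3 = 0" "0 < e3 \<bullet> cross3 (u \<theta>) (v \<theta>)" using normalization interval(3) by auto
    show "u' \<theta> \<bullet> e3 = 0" by (rule pe)
    show "v' \<theta> \<bullet> e3 = 0" by (rule qe)
    show "u' \<theta> \<bullet> u \<theta> \<noteq> 0" "v' \<theta> \<bullet> v \<theta> \<noteq> 0" by (rule reg(1), rule reg(2))
    show "u \<theta> \<bullet> v' \<theta> + u' \<theta> \<bullet> v \<theta> = 0"
      unfolding up vp u_def v_def using g12 g23 g34 g41
      by (simp add: inner_diff_left inner_diff_right inner_commute algebra_simps)
  qed
  show ?thesis using part1 part2 by blast
qed

end
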